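(* Let $r\ge 3$ be fixed, $r\mid n$, and let $\varepsilon>0$ be a sufficiently small constant. Let $p_1=(1+\varepsilon)p_r$ and consider $G^{(r)}_{n,p_1}$. With high probability: (a) $|V_\sigma|\le n^{1-\theta}$ where $\theta=\frac{\varepsilon}{2r\alpha_r}$; (b) no set of at most $\log\log n$ vertices inducing a connected subgraph of $G^{(r)}_{n,p_1}$ contains more than $r\alpha_r$ vertices of $V_\sigma$; (c) every $S\subseteq[n]$ with $|S|\le n/\log^2 n$ spans at most $100|S|$ edges of $G^{(r)}_{n,p_1}$.
   Context: $G^{(r)}_{n,p}$ is the random graph on $[n]$ in which each edge is present independently with probability $p$, and each present edge independently receives a uniformly random color from $[r]$. Logarithms are natural. $\alpha_r=\lceil r/2\rceil$, $p_r=\frac{r}{\alpha_r}\frac{\log n}{n}$. Partition $[n]$ into $V_i=\{(i-1)n/r+1,\dots,in/r\}$, $i\in[r]$, with indices taken cyclically modulo $r$ (so $V_0=V_r$, $V_{r+1}=V_1$, and similarly for colors). For a vertex $v$ and $i\in[r]$, $d_i^+(v)$ is the number of $w\in V_{i+1}$ such that $vw$ is an edge of color $i+1$, and $d_i^-(v)$ is the number of $w\in V_{i-1}$ such that $vw$ is an edge of color $i-1$. Let $\eta_0=\varepsilon^2/r$, let $\eta_1$ be the solution of $\eta_1\log\frac{e(1+\varepsilon)}{r\eta_1\alpha_r}=\frac{1}{r\alpha_r}$, let $\eta_2$ be the solution of $\eta_2\log\frac{3er(1+\varepsilon)}{\eta_2\alpha_r}=\frac{1}{3\alpha_r}$ (in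 each case the small positive solution), and $\eta=\min\{\eta_0,\eta_1,\eta_2\}$. A vertex $v$ is large if $d_i^+(v)\ge\eta\log n$ and $d_i^-(v)\ge\eta\log n$ for all $i\in[r]$, and small otherwise; $V_\sigma$ is the set of small vertices. "With high probability" means with probability $1-o(1)$ as $n\to\infty$. *)

theory Defs
  imports "HOL-Probability.Probability"
begin

text \<open>Colored random graph on [n] = {1..n}. An outcome is a function on ordered pairs (i,j)
 with 1 <= i < j <= n: None = no edge, Some c = edge of colour c in {1..r}.\<close>

definition edge_pairs :: "nat \<Rightarrow> (nat \<times> nat) set" where
  "edge_pairs n = {(i, j). 1 \<le> i \<and> i < j \<and> j \<le> n}"

definition edge_dist :: "real \<Rightarrow> nat \<Rightarrow> nat option pmf" where
  "edge_dist p r = bernoulli_pmf p \<bind>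
     (\<lambda>b. if b then map_pmf Some (pmf_of_set {1..r}) else return_pmf None)"

definition Gnp_col :: "nat \<Rightarrow> real \<Rightarrow> nat \<Rightarrow> ((nat \<times> nat) \<Rightarrow> nat option) pmf" where
  "Gnp_col n p r = Pi_pmf (edge_pairs n) None (\<lambda>_. edge_dist p r)"

type_synonym cgraph = "(nat \<times> nat) \<Rightarrow> nat option"

definition col :: "cgraph \<Rightarrow> nat \<Rightarrow> nat \<Rightarrow> nat option" where
  "col G v w = (if v = w then None else G (min v w, max v w))"

definition adj :: "cgraph \<Rightarrow> nat \<Rightarrow> nat \<Rightarrow> bool" where
  "adj G v w \<longleftrightarrow> col G v w \<noteq> None"

definition alpha_r :: "nat \<Rightarrow> nat" where
  "alpha_r r = (r + 1) div 2"

definition p_r :: "nat \<Rightarrow> nat \<Rightarrow> real" where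
  "p_r r n = real r / real (alpha_r r) * ln (real n) / real n"

definition part :: "nat \<Rightarrow> nat \<Rightarrow> nat \<Rightarrow> nat set" where
  "part n r i = {v. (i - 1) * (n div r) < v \<and> v \<le> i * (n div r)}"

definition csucc :: "nat \<Rightarrow> nat \<Rightarrow> nat" where
  "csucc r i = (if i = r then 1 else i + 1)"

definition cpred :: "nat \<Rightarrow> nat \<Rightarrow> nat" where
  "cpred r i = (if i = 1 then r else i - 1)"

definition dplus :: "cgraph \<Rightarrow> nat \<Rightarrow> nat \<Rightarrow> nat \<Rightarrow> nat \<Rightarrow> nat" where
  "dplus G n r i v = card {w \<in> part n r (csucc r i). col G v w = Some (csucc r i)}"

definition dminus :: "cgraph \<Rightarrow> nat \<Rightarrow> nat \<Rightarrow> nat \<Rightarrow> nat \<Rightarrow> nat" where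
  "dminus G n r i v = card {w \<in> part n r (cpred r i). col G v w = Some (cpred r i)}"

text \<open>The small positive solution of x * ln (C / x) = b: the unique solution in (0, C/e)
  (x ln(C/x) is strictly increasing there).\<close>
definition small_sol :: "real \<Rightarrow> real \<Rightarrow> real" where
  "small_sol C b = (THE x. 0 < x \<and> x < C / exp 1 \<and> x * ln (C / x) = b)"

definition eta0 :: "real \<Rightarrow> nat \<Rightarrow> real" where
  "eta0 \<epsilon> r = \<epsilon>\<^sup>2 / real r"

definition eta1 :: "real \<Rightarrow> nat \<Rightarrow> real" where
  "eta1 \<epsilon> r = small_sol (exp 1 * (1 + \<epsilon>) / (real r * real (alpha_r r)))
                          (1 / (real r * real (alpha_r r)))"

definition eta2 :: "real \<Rightarrow> nat \<Rightarrow> real" where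
  "eta2 \<epsilon> r = small_sol (3 * exp 1 * real r * (1 + \<epsilon>) / real (alpha_r r))
                          (1 / (3 * real (alpha_r r)))"

definition eta :: "real \<Rightarrow> nat \<Rightarrow> real" where
  "eta \<epsilon> r = min (eta0 \<epsilon> r) (min (eta1 \<epsilon> r) (eta2 \<epsilon> r))"

definition large :: "real \<Rightarrow> cgraph \<Rightarrow> nat \<Rightarrow> nat \<Rightarrow> nat \<Rightarrow> bool" where
  "large \<epsilon> G n r v \<longleftrightarrow> (\<forall>i\<in>{1..r}.
      real (dplus G n r i v) \<ge> eta \<epsilon> r * ln (real n) \<and>
      real (dminus G n r i v) \<ge> eta \<epsilon> r * ln (real n))"

definition small_set :: "real \<Rightarrow> cgraph \<Rightarrow> nat \<Rightarrow> nat \<Rightarrow> nat set" where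
  "small_set \<epsilon> G n r = {v \<in> {1..n}. \<not> large \<epsilon> G n r v}"

definition induced_connected :: "cgraph \<Rightarrow> nat set \<Rightarrow> bool" where
  "induced_connected G S \<longleftrightarrow>
     (\<forall>u\<in>S. \<forall>v\<in>S. (\<lambda>x y. x \<in> S \<and> y \<in> S \<and> adj G x y)\<^sup>*\<^sup>* u v)"

definition spanned_edges :: "cgraph \<Rightarrow> nat set \<Rightarrow> nat" where
  "spanned_edges G S = card {(i, j). i \<in> S \<and> j \<in> S \<and> i < j \<and> G (i, j) \<noteq> None}"

end

theory Submission
  imports Defs "HOL-Real_Asymp.Real_Asymp"
begin

lemma set_pmf_edge_dist: "r \<ge> 1 \<Longrightarrow> set_pmf (edge_dist p r) \<subseteq> insert None (Some ` {1..r})"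
  by (auto simp: edge_dist_def split: if_splits)

lemma pmf_edge_dist_None:
  assumes "0 \<le> p" "p \<le> 1" "r \<ge> 1"
  shows "pmf (edge_dist p r) None = 1 - p"
  using assms by (simp add: edge_dist_def pmf_bind pmf_map vimage_def)

lemma pmf_edge_dist_Some:
  assumes "0 \<le> p" "p \<le> 1" "r \<ge> 1"
  shows "pmf (edge_dist p r) (Some c) = p * indicator {1..r} c / r"
  using assms by (simp add: edge_dist_def pmf_bind pmf_map vimage_def measure_pmf_single indicator_def)

lemma expectation_edge_dist:
  fixes f :: "nat option \<Rightarrow> real"
  assumes "0 \<le> p" "p \<le> 1" "r \<ge> 1"
  shows "measure_pmf.expectation (edge_dist p r) f = (1-p) * f None + p / r * (\<Sum>c\<in>{1..r}. f (Some c))"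
proof -
  have "measure_pmf.expectation (edge_dist p r) f = (\<Sum>a\<in>insert None (Some ` {1..r}). f a * pmf (edge_dist p r) a)"
    by (rule integral_measure_pmf_real) (use set_pmf_edge_dist[OF assms(3), of p] in auto)
  also have "\<dots> = f None * (1 - p) + (\<Sum>a\<in>Some ` {1..r}. f a * pmf (edge_dist p r) a)"
    by (subst sum.insert) (auto simp: pmf_edge_dist_None[OF assms])
  also have "(\<Sum>a\<in>Some ` {1..r}. f a * pmf (edge_dist p r) a) = (\<Sum>c\<in>{1..r}. f (Some c) * (p / r))"
    by (subst sum.reindex) (auto simp: pmf_edge_dist_Some[OF assms] intro!: sum.cong)
  finally show ?thesis by (simp add: sum_distrib_left sum_distrib_right mult.commute)
qed

lemma finite_edge_pairs: "finite (edge_pairs n)"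
  by (rule finite_subset[of _ "{1..n} \<times> {1..n}"]) (auto simp: edge_pairs_def)

lemma prob_Gnp_le_prod:
  fixes \<phi> :: "nat \<times> nat \<Rightarrow> nat option \<Rightarrow> real"
  assumes p: "0 \<le> p" "p \<le> 1" "r \<ge> 1"
  assumes phi: "\<And>e c. 0 \<le> \<phi> e c" "\<And>e c. \<phi> e c \<le> 1"
  assumes a: "a > 0" and A: "\<And>G. G \<in> A \<Longrightarrow> a \<le> (\<Prod>e\<in>edge_pairs n. \<phi> e (G e))"
  shows "measure_pmf.prob (Gnp_col n p r) A \<le>
           (\<Prod>e\<in>edge_pairs n. measure_pmf.expectation (edge_dist p r) (\<phi> e)) / a"
proof -
  let ?M = "measure_pmf (Gnp_col n p r)"
  let ?F = "\<lambda>G. \<Prod>e\<in>edge_pairs n. \<phi> e (G e)"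
  have int: "integrable ?M ?F"
    by (rule measure_pmf.integrable_const_bound[where B=1])
       (auto intro!: prod_le_1 prod_nonneg simp: phi abs_prod)
  have "measure_pmf.prob (Gnp_col n p r) A \<le> measure ?M {G\<in>space ?M. ?F G \<ge> a}"
    by (rule measure_pmf.finite_measure_mono) (auto dest: A)
  also have "\<dots> \<le> (\<integral>G. ?F G \<partial>?M) / a"
    by (rule integral_Markov_inequality_measure[OF int, where A=UNIV])
       (auto intro!: prod_nonneg simp: phi a)
  also have "(\<integral>G. ?F G \<partial>?M) = (\<Prod>e\<in>edge_pairs n. measure_pmf.expectation (edge_dist p r) (\<phi> e))"
    unfolding Gnp_col_def
    by (rule expectation_prod_Pi_pmf)
       (auto simp: finite_edge_pairs phi intro!: measure_pmf.integrable_const_bound[where B=1])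
  finally show ?thesis .
qed

definition pairsin :: "nat set \<Rightarrow> (nat \<times> nat) set" where
  "pairsin S = {(a, b). a \<in> S \<and> b \<in> S \<and> a < b}"

definition Dout :: "cgraph \<Rightarrow> nat \<Rightarrow> nat \<Rightarrow> nat \<Rightarrow> nat \<Rightarrow> nat set \<Rightarrow> nat" where
  "Dout G n r j v S = card {w \<in> part n r j - S. col G v w = Some j}"

lemma part_eq: "n = r * k \<Longrightarrow> r > 0 \<Longrightarrow> part n r j = {(j - 1) * k <.. j * k}"
  by (auto simp: part_def)

lemma finite_part: "n = r * k \<Longrightarrow> r > 0 \<Longrightarrow> finite (part n r j)"
  by (simp add: part_eq)

lemma card_part: "n = r * k \<Longrightarrow> r > 0 \<Longrightarrow> j \<ge> 1 \<Longrightarrow> card (part n r j) = k"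
  by (simp add: part_eq diff_mult_distrib)

lemma part_subset: "n = r * k \<Longrightarrow> r > 0 \<Longrightarrow> j \<in> {1..r} \<Longrightarrow> part n r j \<subseteq> {1..n}"
proof -
  assume a: "n = r * k" "r > 0" "j \<in> {1..r}"
  show ?thesis using a by (auto simp: part_eq intro: order.trans[OF _ mult_le_mono1])
qed

lemma prod_if_const:
  fixes x :: real
  assumes "finite A"
  shows "(\<Prod>e\<in>A. if P e then x else 1) = x ^ card {e\<in>A. P e}"
proof -
  have "(\<Prod>e\<in>A. if P e then x else 1) = (\<Prod>e\<in>{e\<in>A. P e}. x)"
    by (rule prod.mono_neutral_cong_right) (use assms in auto)
  thus ?thesis by simp
qed

lemma prod_if_const2:
  fixes x y :: real
  assumes "finite A"
  shows "(\<Prod>e\<in>A. if P e then x else if Q e then y else 1) = x ^ card {e\<in>A. P e} * y ^ card {e\<in>A. \<not> P e \<and> Q e}"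
proof -
  have "(\<Prod>e\<in>A. if P e then x else if Q e then y else 1) =
        (\<Prod>e\<in>A. if P e then x else 1) * (\<Prod>e\<in>A. if \<not> P e \<and> Q e then y else 1)"
    by (subst prod.distrib[symmetric]) (auto intro!: prod.cong)
  thus ?thesis using assms by (simp add: prod_if_const)
qed

lemma sum_if_one_x:
  fixes x :: real
  assumes "j \<in> {1..r}"
  shows "(\<Sum>c\<in>{1..r}. if c = j then x else 1) = real r - 1 + x"
proof -
  have "(\<Sum>c\<in>{1..r}. if c = j then x else 1) = (\<Sum>c\<in>{1..r}. 1 - (if c = j then 1 - x else 0))"
    by (rule sum.cong) auto
  also have "\<dots> = real r - (1 - x)"
    using assms by (simp add: sum_subtractf)
  finally show ?thesis by simp
qed

lemma core_bound:
  fixes x t p :: real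
  assumes nk: "n = r * k" and r: "r \<ge> 1" and p: "0 \<le> p" "p \<le> 1"
  assumes x: "0 < x" "x \<le> 1"
  assumes S: "S \<subseteq> {1..n}" and K: "K \<subseteq> S" and F: "F \<subseteq> pairsin S"
  assumes jf: "\<And>v. v \<in> K \<Longrightarrow> jf v \<in> {1..r}"
  shows "measure_pmf.prob (Gnp_col n p r)
           {G. (\<forall>e\<in>F. G e \<noteq> None) \<and> (\<forall>v\<in>K. real (Dout G n r (jf v) v S) \<le> t)}
         \<le> p ^ card F * exp (- (p / r) * (1 - x) * card K * (real k - card S)) / x powr (t * card K)"
proof -
  define EP where "EP = edge_pairs n"
  define owner :: "nat \<times> nat \<Rightarrow> nat" where "owner e = (if fst e \<in> S then fst e else snd e)" for e
  define B where "B v = (\<lambda>w. (min v w, max v w)) ` (part n r (jf v) - S)" for v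
  define cnd where "cnd e \<longleftrightarrow> owner e \<in> K \<and> e \<in> B (owner e)" for e
  define \<phi> :: "nat \<times> nat \<Rightarrow> nat option \<Rightarrow> real" where
    "\<phi> e c = (if e \<in> F then (if c = None then 0 else 1)
              else if cnd e then (if c = Some (jf (owner e)) then x else 1) else 1)" for e c
  define y where "y = 1 - p / r * (1 - x)"
  define C where "C = {e\<in>EP. e \<notin> F \<and> cnd e}"
  have r0: "r > 0" using r by simp
  have finEP: "finite EP" by (simp add: EP_def finite_edge_pairs)
  have finS: "finite S" using S finite_subset by blast
  have finK: "finite K" using K finS finite_subset by blast
  have FEP: "F \<subseteq> EP" using F S by (auto simp: pairsin_def EP_def edge_pairs_def)
  have inB: "owner e = v \<and> e \<in> EP \<and> e \<notin> F" if v: "v \<in> K" and e: "e \<in> B v" for v e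
  proof -
    obtain w where w: "w \<in> part n r (jf v) - S" "e = (min v w, max v w)"
      using e by (auto simp: B_def)
    have vS: "v \<in> S" using v K by auto
    have "w \<in> {1..n}" using w part_subset[OF nk r0 jf[OF v]] by auto
    moreover have "v \<in> {1..n}" using vS S by auto
    moreover have "v \<noteq> w" using w vS by auto
    ultimately show ?thesis using w vS F
      by (auto simp: owner_def EP_def edge_pairs_def pairsin_def min_def max_def)
  qed
  have Bdisj: "B v \<inter> B v' = {}" if "v \<in> K" "v' \<in> K" "v \<noteq> v'" for v v'
    using inB that by blast
  have UB: "(\<Union>v\<in>K. B v) \<subseteq> C"
    using inB by (auto simp: C_def cnd_def)
  have cardB: "card (B v) = card (part n r (jf v) - S)" if v: "v \<in> K" for v
  proof -
    have mm: "w = min v w + max v w - v" for w :: nat by (simp add: min_def max_def)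
    have "inj_on (\<lambda>w. (min v w, max v w)) (part n r (jf v) - S)"
    proof (rule inj_onI)
      fix w w' assume "(min v w, max v w) = (min v w', max v w')"
      thus "w = w'" using mm[of w] mm[of w'] by simp
    qed
    thus ?thesis by (simp add: B_def card_image)
  qed
  have cardB2: "real (card (B v)) \<ge> real k - card S" if v: "v \<in> K" for v
  proof -
    have "card (part n r (jf v)) - card S \<le> card (part n r (jf v) - S)"
      by (rule diff_card_le_card_Diff[OF finS])
    hence "card (part n r (jf v)) \<le> card (part n r (jf v) - S) + card S" by arith
    thus ?thesis using card_part[OF nk r0, of "jf v"] jf[OF v] cardB[OF v] by simp
  qed
  have finB: "finite (B v)" for v
    by (simp add: B_def finite_part[OF nk r0])
  have cardC: "real (card C) \<ge> real (card K) * (real k - card S)"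
  proof -
    have "real (card K) * (real k - card S) = (\<Sum>v\<in>K. real k - card S)" by simp
    also have "\<dots> \<le> (\<Sum>v\<in>K. real (card (B v)))"
      by (rule sum_mono) (rule cardB2)
    also have "\<dots> = real (card (\<Union>v\<in>K. B v))"
      by (subst card_UN_disjoint) (use finK finB Bdisj in auto)
    also have "\<dots> \<le> real (card C)"
      using UB by (intro of_nat_mono card_mono) (auto simp: C_def finEP)
    finally show ?thesis .
  qed
  have y: "0 \<le> y" "y \<le> exp (- (p / r) * (1 - x))"
  proof -
    have "p / r * (1 - x) \<le> 1 * 1"
      using p x r by (intro mult_mono) (auto simp: field_simps)
    thus "0 \<le> y" by (simp add: y_def)
    show "y \<le> exp (- (p / r) * (1 - x))" using exp_ge_add_one_self[of "- (p / r) * (1 - x)"]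
      by (simp add: y_def)
  qed
  have expect: "measure_pmf.expectation (edge_dist p r) (\<phi> e) =
      (if e \<in> F then p else if cnd e then y else 1)" for e
  proof -
    have "measure_pmf.expectation (edge_dist p r) (\<phi> e) =
          (1-p) * \<phi> e None + p / r * (\<Sum>c\<in>{1..r}. \<phi> e (Some c))"
      by (rule expectation_edge_dist[OF p r])
    moreover have "jf (owner e) \<in> {1..r}" if "cnd e"
      using that jf by (auto simp: cnd_def)
    moreover have "(\<Sum>c\<in>{1..r}. \<phi> e (Some c)) = (if e \<in> F then real r else if cnd e then real r - 1 + x else real r)"
      using sum_if_one_x[of "jf (owner e)" r x] jf by (auto simp: \<phi>_def cnd_def)
    moreover have "\<phi> e None = (if e \<in> F then 0 else 1)" by (simp add: \<phi>_def)
    moreover have "(1 - p) * 1 + p / r * (real r - 1 + x) = y"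
      using r0 by (simp add: y_def field_simps)
    ultimately show ?thesis using r0
      by (auto simp: field_simps)
  qed
  let ?a = "x powr (t * card K)"
  have "measure_pmf.prob (Gnp_col n p r)
           {G. (\<forall>e\<in>F. G e \<noteq> None) \<and> (\<forall>v\<in>K. real (Dout G n r (jf v) v S) \<le> t)}
        \<le> (\<Prod>e\<in>edge_pairs n. measure_pmf.expectation (edge_dist p r) (\<phi> e)) / ?a"
  proof (rule prob_Gnp_le_prod[OF p r])
    show "0 \<le> \<phi> e c" "\<phi> e c \<le> 1" for e c using x by (auto simp: \<phi>_def)
    show "?a > 0" using x by simp
    fix G assume G: "G \<in> {G. (\<forall>e\<in>F. G e \<noteq> None) \<and> (\<forall>v\<in>K. real (Dout G n r (jf v) v S) \<le> t)}"
    define C' where "C' = {e\<in>EP. e \<notin> F \<and> cnd e \<and> G e = Some (jf (owner e))}"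
    have "(\<Prod>e\<in>edge_pairs n. \<phi> e (G e)) = (\<Prod>e\<in>EP. if e \<notin> F \<and> cnd e \<and> G e = Some (jf (owner e)) then x else 1)"
    proof -
      have GF: "e \<in> F \<Longrightarrow> G e \<noteq> None" for e using G by auto
      show ?thesis by (auto simp: EP_def \<phi>_def GF intro!: prod.cong)
    qed
    also have "\<dots> = x ^ card C'" by (simp add: prod_if_const finEP C'_def)
    finally have eq: "(\<Prod>e\<in>edge_pairs n. \<phi> e (G e)) = x ^ card C'" .
    define D where "D v = (\<lambda>w. (min v w, max v w)) ` {w \<in> part n r (jf v) - S. col G v w = Some (jf v)}" for v
    have "C' \<subseteq> (\<Union>v\<in>K. D v)"
    proof
      fix e assume e: "e \<in> C'"
      hence v: "owner e \<in> K" "e \<in> B (owner e)" by (auto simp: C'_def cnd_def)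
      then obtain w where w: "w \<in> part n r (jf (owner e)) - S" "e = (min (owner e) w, max (owner e) w)"
        by (auto simp: B_def)
      have "owner e \<noteq> w" using w v K by auto
      hence "col G (owner e) w = G e" using w by (simp add: col_def)
      hence "w \<in> {w \<in> part n r (jf (owner e)) - S. col G (owner e) w = Some (jf (owner e))}"
        using e w by (simp add: C'_def)
      thus "e \<in> (\<Union>v\<in>K. D v)" using v w by (auto simp: D_def)
    qed
    hence "card C' \<le> card (\<Union>v\<in>K. D v)"
      by (intro card_mono) (auto simp: D_def finK finite_part[OF nk r0])
    also have "\<dots> \<le> (\<Sum>v\<in>K. card (D v))" by (rule card_UN_le[OF finK])
    also have "\<dots> \<le> (\<Sum>v\<in>K. Dout G n r (jf v) v S)"
      by (intro sum_mono) (simp add: D_def Dout_def card_image_le finite_part[OF nk r0])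
    finally have "real (card C') \<le> (\<Sum>v\<in>K. real (Dout G n r (jf v) v S))"
      by (simp flip: of_nat_sum)
    also have "\<dots> \<le> (\<Sum>v\<in>K. t)" using G by (intro sum_mono) auto
    finally have "real (card C') \<le> t * card K" by (simp add: mult.commute)
    hence "x powr (t * card K) \<le> x powr (real (card C'))"
      using x by (intro powr_mono') auto
    thus "?a \<le> (\<Prod>e\<in>edge_pairs n. \<phi> e (G e))" using eq x by (simp add: powr_realpow)
  qed
  also have "(\<Prod>e\<in>edge_pairs n. measure_pmf.expectation (edge_dist p r) (\<phi> e)) = p ^ card F * y ^ card C"
    by (simp add: expect prod_if_const2 finEP EP_def[symmetric] C_def Int_absorb1 FEP
          flip: Int_def[of EP])
  also have "y ^ card C \<le> exp (- (p / r) * (1 - x)) ^ card C"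
    by (intro power_mono y)
  also have "\<dots> = exp (- (p / r) * (1 - x) * card C)"
    by (simp add: exp_of_nat_mult[symmetric] mult.commute)
  also have "\<dots> \<le> exp (- (p / r) * (1 - x) * card K * (real k - card S))"
  proof -
    have "0 \<le> p / r * (1 - x)" using p x by simp
    hence "p / r * (1 - x) * (real (card K) * (real k - card S)) \<le> p / r * (1 - x) * card C"
      by (intro mult_left_mono cardC)
    thus ?thesis by (simp add: mult.assoc)
  qed
  finally show ?thesis using p x
    by (simp add: divide_right_mono mult_left_mono)
qed

lemma union_bound_card:
  fixes b :: real
  assumes "finite I" "\<And>i. i \<in> I \<Longrightarrow> measure_pmf.prob M (A i) \<le> b"
  shows "measure_pmf.prob M (\<Union>i\<in>I. A i) \<le> card I * b"
proof -
  have "measure_pmf.prob M (\<Union>i\<in>I. A i) \<le> (\<Sum>i\<in>I. measure_pmf.prob M (A i))"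
    by (rule measure_pmf.finite_measure_subadditive_finite) (use assms in auto)
  also have "\<dots> \<le> (\<Sum>i\<in>I. b)" by (rule sum_mono) (rule assms(2))
  finally show ?thesis by simp
qed

lemma union_bound_sum:
  assumes "finite I" "\<And>i. i \<in> I \<Longrightarrow> measure_pmf.prob M (A i) \<le> b i"
  shows "measure_pmf.prob M (\<Union>i\<in>I. A i) \<le> (\<Sum>i\<in>I. b i)"
proof -
  have "measure_pmf.prob M (\<Union>i\<in>I. A i) \<le> (\<Sum>i\<in>I. measure_pmf.prob M (A i))"
    by (rule measure_pmf.finite_measure_subadditive_finite) (use assms in auto)
  also have "\<dots> \<le> (\<Sum>i\<in>I. b i)" by (rule sum_mono) (rule assms(2))
  finally show ?thesis .
qed

lemma card_pairsin: "finite S \<Longrightarrow> card (pairsin S) \<le> card S * card S"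
proof -
  assume "finite S"
  hence "card (pairsin S) \<le> card (S \<times> S)"
    by (intro card_mono) (auto simp: pairsin_def)
  thus ?thesis by (simp add: card_cartesian_product)
qed

lemma finite_pairsin: "finite S \<Longrightarrow> finite (pairsin S)"
  by (rule finite_subset[of _ "S \<times> S"]) (auto simp: pairsin_def)

lemma prob_all_present:
  assumes nk: "n = r * k" and r: "r \<ge> 1" and p: "0 \<le> p" "p \<le> 1"
  assumes S: "S \<subseteq> {1..n}" and F: "F \<subseteq> pairsin S"
  shows "measure_pmf.prob (Gnp_col n p r) {G. \<forall>e\<in>F. G e \<noteq> None} \<le> p ^ card F"
  using core_bound[OF nk r p, of 1 S "{}" F id 0] S F by simp

lemma part_c_prob:
  assumes nk: "n = r * k" and r: "r \<ge> 1" and p: "0 \<le> p" "p \<le> 1"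
  shows "measure_pmf.prob (Gnp_col n p r)
     {G. \<exists>S \<subseteq> {1..n}. real (card S) \<le> M \<and> spanned_edges G S > 100 * card S}
     \<le> (\<Sum>s\<in>{1..nat \<lfloor>M\<rfloor>}. real (n choose s) * real ((s * s) choose (100 * s + 1)) * p ^ (100 * s + 1))"
proof -
  define Ev where "Ev F = {G :: cgraph. \<forall>e\<in>F. G e \<noteq> None}" for F :: "(nat \<times> nat) set"
  define SS where "SS s = {S. S \<subseteq> {1..n} \<and> card S = s}" for s
  define FF where "FF s S = {F. F \<subseteq> pairsin S \<and> card F = 100 * s + 1}" for s S
  have sub: "{G. \<exists>S \<subseteq> {1..n}. real (card S) \<le> M \<and> spanned_edges G S > 100 * card S}
      \<subseteq> (\<Union>s\<in>{1..nat \<lfloor>M\<rfloor>}. \<Union>S\<in>SS s. \<Union>F\<in>FF s S. Ev F)"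
  proof
    fix G assume "G \<in> {G. \<exists>S \<subseteq> {1..n}. real (card S) \<le> M \<and> spanned_edges G S > 100 * card S}"
    then obtain S where S: "S \<subseteq> {1..n}" "real (card S) \<le> M" "spanned_edges G S > 100 * card S"
      by auto
    define Pr where "Pr = {(i, j). i \<in> S \<and> j \<in> S \<and> i < j \<and> G (i, j) \<noteq> None}"
    have finS: "finite S" using S finite_subset by blast
    have "Pr \<subseteq> pairsin S" by (auto simp: Pr_def pairsin_def)
    have "card Pr > 100 * card S" using S by (simp add: Pr_def spanned_edges_def)
    then obtain F where F: "F \<subseteq> Pr" "card F = 100 * card S + 1"
      by (metis Suc_eq_plus1 Suc_leI obtain_subset_with_card_n)
    have "card S \<noteq> 0"
    proof
      assume "card S = 0"
      hence "S = {}" using finS by simp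
      hence "Pr = {}" by (simp add: Pr_def)
      thus False using \<open>card Pr > 100 * card S\<close> by simp
    qed
    moreover have "card S \<le> nat \<lfloor>M\<rfloor>" using S(2) by linarith
    moreover have "S \<in> SS (card S)" using S by (simp add: SS_def)
    moreover have "F \<in> FF (card S) S" using F \<open>Pr \<subseteq> pairsin S\<close> by (auto simp: FF_def)
    moreover have "G \<in> Ev F" using F by (auto simp: Ev_def Pr_def)
    ultimately show "G \<in> (\<Union>s\<in>{1..nat \<lfloor>M\<rfloor>}. \<Union>S\<in>SS s. \<Union>F\<in>FF s S. Ev F)" by force
  qed
  have "measure_pmf.prob (Gnp_col n p r)
     {G. \<exists>S \<subseteq> {1..n}. real (card S) \<le> M \<and> spanned_edges G S > 100 * card S}
     \<le> measure_pmf.prob (Gnp_col n p r) (\<Union>s\<in>{1..nat \<lfloor>M\<rfloor>}. \<Union>S\<in>SS s. \<Union>F\<in>FF s S. Ev F)"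
    by (rule measure_pmf.finite_measure_mono[OF sub]) simp
  also have "\<dots> \<le> (\<Sum>s\<in>{1..nat \<lfloor>M\<rfloor>}. real (n choose s) * real ((s * s) choose (100 * s + 1)) * p ^ (100 * s + 1))"
  proof (rule union_bound_sum, simp)
    fix s assume s: "s \<in> {1..nat \<lfloor>M\<rfloor>}"
    have finSS: "finite (SS s)" by (rule finite_subset[of _ "Pow {1..n}"]) (auto simp: SS_def)
    have cSS: "card (SS s) = n choose s" using n_subsets[of "{1..n}" s] by (simp add: SS_def)
    have "measure_pmf.prob (Gnp_col n p r) (\<Union>S\<in>SS s. \<Union>F\<in>FF s S. Ev F)
         \<le> card (SS s) * (real ((s * s) choose (100 * s + 1)) * p ^ (100 * s + 1))"
    proof (rule union_bound_card[OF finSS])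
      fix S assume S: "S \<in> SS s"
      have finS: "finite S" using S finite_subset by (auto simp: SS_def)
      have finFF: "finite (FF s S)"
        by (rule finite_subset[of _ "Pow (pairsin S)"]) (auto simp: FF_def finite_pairsin[OF finS])
      have "card (FF s S) = card (pairsin S) choose (100 * s + 1)"
        using n_subsets[OF finite_pairsin[OF finS]] by (simp add: FF_def)
      also have "\<dots> \<le> (s * s) choose (100 * s + 1)"
        using card_pairsin[OF finS] S by (intro binomial_right_mono) (simp add: SS_def)
      finally have cFF: "card (FF s S) \<le> (s * s) choose (100 * s + 1)" .
      have "measure_pmf.prob (Gnp_col n p r) (\<Union>F\<in>FF s S. Ev F) \<le> card (FF s S) * p ^ (100 * s + 1)"
      proof (rule union_bound_card[OF finFF])
        fix F assume F: "F \<in> FF s S"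
        show "measure_pmf.prob (Gnp_col n p r) (Ev F) \<le> p ^ (100 * s + 1)"
          using prob_all_present[OF nk r p, of S F] F S by (auto simp: Ev_def FF_def SS_def)
      qed
      also have "\<dots> \<le> real ((s * s) choose (100 * s + 1)) * p ^ (100 * s + 1)"
        using cFF p by (intro mult_right_mono) auto
      finally show "measure_pmf.prob (Gnp_col n p r) (\<Union>F\<in>FF s S. Ev F) \<le> \<dots>" .
    qed
    thus "measure_pmf.prob (Gnp_col n p r) (\<Union>S\<in>SS s. \<Union>F\<in>FF s S. Ev F)
         \<le> real (n choose s) * real ((s * s) choose (100 * s + 1)) * p ^ (100 * s + 1)"
      by (simp add: cSS mult.assoc)
  qed
  finally show ?thesis .
qed

lemma rtranclp_cross:
  assumes "R\<^sup>*\<^sup>* a b" "a \<in> T" "b \<notin> T"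
  shows "\<exists>x y. R x y \<and> x \<in> T \<and> y \<notin> T"
  using assms by (induction rule: rtranclp_induct) auto

lemma connected_edges:
  assumes finS: "finite S" and conn: "induced_connected G S" and ne: "S \<noteq> {}"
  shows "card {e \<in> pairsin S. G e \<noteq> None} \<ge> card S - 1"
proof -
  have "\<exists>T \<subseteq> S. T \<noteq> {} \<and> card T = Suc m \<and> card {e \<in> pairsin T. G e \<noteq> None} \<ge> m"
    if "Suc m \<le> card S" for m
    using that
  proof (induction m)
    case 0
    then obtain a where "a \<in> S" using ne by auto
    thus ?case by (intro exI[of _ "{a}"]) auto
  next
    case (Suc m)
    then obtain T where T: "T \<subseteq> S" "T \<noteq> {}" "card T = Suc m" "card {e \<in> pairsin T. G e \<noteq> None} \<ge> m"
      by auto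
    have finT: "finite T" using T finS finite_subset by blast
    have "T \<noteq> S" using T Suc.prems by auto
    then obtain b0 where b0: "b0 \<in> S" "b0 \<notin> T" using T by auto
    obtain a0 where a0: "a0 \<in> T" using T by auto
    have "(\<lambda>x y. x \<in> S \<and> y \<in> S \<and> adj G x y)\<^sup>*\<^sup>* a0 b0"
      using conn a0 b0 T by (auto simp: induced_connected_def)
    then obtain a b where ab: "a \<in> S" "b \<in> S" "adj G a b" "a \<in> T" "b \<notin> T"
      using rtranclp_cross[of _ a0 b0 T] a0 b0 by blast
    define T' where "T' = insert b T"
    have ab2: "a \<noteq> b" "G (min a b, max a b) \<noteq> None"
      using ab by (auto simp: adj_def col_def split: if_splits)
    have sub: "insert (min a b, max a b) {e \<in> pairsin T. G e \<noteq> None} \<subseteq> {e \<in> pairsin T'. G e \<noteq> None}"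
      using ab ab2 by (auto simp: pairsin_def T'_def min_def max_def)
    have notin: "(min a b, max a b) \<notin> pairsin T" using ab by (auto simp: pairsin_def min_def max_def)
    have "Suc m \<le> card (insert (min a b, max a b) {e \<in> pairsin T. G e \<noteq> None})"
      using T(4) notin finite_pairsin[OF finT] by (subst card_insert_disjoint) auto
    also have "\<dots> \<le> card {e \<in> pairsin T'. G e \<noteq> None}"
      using sub finT by (intro card_mono) (auto simp: T'_def finite_pairsin)
    finally show ?case using T ab finT by (intro exI[of _ T']) (auto simp: T'_def)
  qed
  from this[of "card S - 1"] obtain T where T: "T \<subseteq> S" "card T = card S"
      "card {e \<in> pairsin T. G e \<noteq> None} \<ge> card S - 1"
    using ne finS by (auto simp: card_gt_0_iff Suc_le_eq)
  have "T = S" using T finS by (simp add: card_subset_eq)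
  thus ?thesis using T by simp
qed

lemma csucc_in: "i \<in> {1..r} \<Longrightarrow> csucc r i \<in> {1..r}"
  by (auto simp: csucc_def)

lemma cpred_in: "i \<in> {1..r} \<Longrightarrow> cpred r i \<in> {1..r}"
  by (auto simp: cpred_def)

lemma small_D:
  assumes "v \<in> small_set \<epsilon> G n r"
  shows "\<exists>j\<in>{1..r}. real (card {w \<in> part n r j. col G v w = Some j}) < eta \<epsilon> r * ln (real n)"
  using assms csucc_in cpred_in
  by (auto simp: small_set_def large_def dplus_def dminus_def not_le)

lemma Dout_le: "n = r * k \<Longrightarrow> r > 0 \<Longrightarrow> Dout G n r j v S \<le> card {w \<in> part n r j. col G v w = Some j}"
  unfolding Dout_def by (intro card_mono) (auto simp: finite_part)

lemma small_Dout:
  assumes nk: "n = r * k" "r > 0" and v: "v \<in> small_set \<epsilon> G n r"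
  assumes t: "eta \<epsilon> r * ln (real n) \<le> t"
  shows "\<exists>j\<in>{1..r}. real (Dout G n r j v S) \<le> t"
proof -
  obtain j where j: "j \<in> {1..r}" "real (card {w \<in> part n r j. col G v w = Some j}) < eta \<epsilon> r * ln (real n)"
    using small_D[OF v] by auto
  have "real (Dout G n r j v S) \<le> real (card {w \<in> part n r j. col G v w = Some j})"
    using Dout_le[OF nk] by simp
  thus ?thesis using j t by (intro bexI[of _ j]) auto
qed

lemma part_b_prob:
  fixes x t p :: real
  assumes nk: "n = r * k" and r: "r \<ge> 1" and p: "0 \<le> p" "p \<le> 1"
  assumes x: "0 < x" "x \<le> 1" and t: "eta \<epsilon> r * ln (real n) \<le> t" and k0: "k0 \<ge> 1"
  shows "measure_pmf.prob (Gnp_col n p r)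
     {G. \<exists>S \<subseteq> {1..n}. real (card S) \<le> M \<and> induced_connected G S \<and> card (S \<inter> small_set \<epsilon> G n r) \<ge> k0}
     \<le> (\<Sum>s\<in>{1..nat \<lfloor>M\<rfloor>}. real (n choose s) * real ((s * s) choose (s - 1)) * real (s choose k0) * real r ^ k0 *
          (p ^ (s - 1) * exp (- (p / r) * (1 - x) * k0 * (real k - s)) / x powr (t * k0)))"
proof -
  have r0: "r > 0" using r by simp
  define Ev where "Ev S F K jf = {G :: cgraph. (\<forall>e\<in>F. G e \<noteq> None) \<and> (\<forall>v\<in>K. real (Dout G n r (jf v) v S) \<le> t)}"
    for S F K jf
  define SS where "SS s = {S. S \<subseteq> {1..n} \<and> card S = s}" for s
  define FF where "FF s S = {F. F \<subseteq> pairsin S \<and> card F = s - 1}" for s :: nat and S :: "nat set"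
  define KK where "KK S = {K. K \<subseteq> S \<and> card K = k0}" for S :: "nat set"
  define JJ where "JJ K = (K \<rightarrow>\<^sub>E {1..r})" for K :: "nat set"
  have sub: "{G. \<exists>S \<subseteq> {1..n}. real (card S) \<le> M \<and> induced_connected G S \<and> card (S \<inter> small_set \<epsilon> G n r) \<ge> k0}
      \<subseteq> (\<Union>s\<in>{1..nat \<lfloor>M\<rfloor>}. \<Union>S\<in>SS s. \<Union>F\<in>FF s S. \<Union>K\<in>KK S. \<Union>jf\<in>JJ K. Ev S F K jf)"
  proof
    fix G assume "G \<in> {G. \<exists>S \<subseteq> {1..n}. real (card S) \<le> M \<and> induced_connected G S \<and> card (S \<inter> small_set \<epsilon> G n r) \<ge> k0}"
    then obtain S where S: "S \<subseteq> {1..n}" "real (card S) \<le> M" "induced_connected G S"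
        "card (S \<inter> small_set \<epsilon> G n r) \<ge> k0"
      by auto
    have finS: "finite S" using S finite_subset by blast
    show "G \<in> (\<Union>s\<in>{1..nat \<lfloor>M\<rfloor>}. \<Union>S\<in>SS s. \<Union>F\<in>FF s S. \<Union>K\<in>KK S. \<Union>jf\<in>JJ K. Ev S F K jf)"
    proof (cases "S = {}")
      case True
      thus ?thesis using S(4) k0 by simp
    next
      case ne: False
      have ce: "card S - 1 \<le> card {e \<in> pairsin S. G e \<noteq> None}"
        by (rule connected_edges[OF finS S(3) ne])
      obtain F where F: "F \<subseteq> {e \<in> pairsin S. G e \<noteq> None}" "card F = card S - 1"
        using obtain_subset_with_card_n[OF ce] by blast
      obtain K where K: "K \<subseteq> S \<inter> small_set \<epsilon> G n r" "card K = k0"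
        using obtain_subset_with_card_n[OF S(4)] by blast
      have "\<forall>v\<in>K. \<exists>j. j \<in> {1..r} \<and> real (Dout G n r j v S) \<le> t"
      proof
        fix v assume "v \<in> K"
        hence "v \<in> small_set \<epsilon> G n r" using K by auto
        hence "\<exists>j\<in>{1..r}. real (Dout G n r j v S) \<le> t" by (rule small_Dout[OF nk r0 _ t])
        thus "\<exists>j. j \<in> {1..r} \<and> real (Dout G n r j v S) \<le> t" by blast
      qed
      from bchoice[OF this] obtain jf where jf: "\<forall>v\<in>K. jf v \<in> {1..r} \<and> real (Dout G n r (jf v) v S) \<le> t"
        by blast
      define jf' where "jf' = restrict jf K"
      have "card S \<noteq> 0" using ne finS by simp
      moreover have "card S \<le> nat \<lfloor>M\<rfloor>" using S(2) by linarith
      ultimately have i1: "card S \<in> {1..nat \<lfloor>M\<rfloor>}" by simp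
      have i2: "S \<in> SS (card S)" using S by (simp add: SS_def)
      have i3: "F \<in> FF (card S) S" using F by (auto simp: FF_def)
      have i4: "K \<in> KK S" using K by (auto simp: KK_def)
      have i5: "jf' \<in> JJ K" using jf by (auto simp: JJ_def jf'_def)
      have i6: "G \<in> Ev S F K jf'" using F jf by (auto simp: Ev_def jf'_def)
      show ?thesis
        by (rule UN_I[OF i1], rule UN_I[OF i2], rule UN_I[OF i3], rule UN_I[OF i4], rule UN_I[OF i5], rule i6)
    qed
  qed
  have "measure_pmf.prob (Gnp_col n p r)
     {G. \<exists>S \<subseteq> {1..n}. real (card S) \<le> M \<and> induced_connected G S \<and> card (S \<inter> small_set \<epsilon> G n r) \<ge> k0}
     \<le> measure_pmf.prob (Gnp_col n p r) (\<Union>s\<in>{1..nat \<lfloor>M\<rfloor>}. \<Union>S\<in>SS s. \<Union>F\<in>FF s S. \<Union>K\<in>KK S. \<Union>jf\<in>JJ K. Ev S F K jf)"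
    by (rule measure_pmf.finite_measure_mono[OF sub]) simp
  also have "\<dots> \<le> (\<Sum>s\<in>{1..nat \<lfloor>M\<rfloor>}. real (n choose s) * real ((s * s) choose (s - 1)) * real (s choose k0) * real r ^ k0 *
          (p ^ (s - 1) * exp (- (p / r) * (1 - x) * k0 * (real k - s)) / x powr (t * k0)))"
  proof (rule union_bound_sum, simp)
    fix s assume s: "s \<in> {1..nat \<lfloor>M\<rfloor>}"
    define B where "B = p ^ (s - 1) * exp (- (p / r) * (1 - x) * k0 * (real k - s)) / x powr (t * k0)"
    have B0: "B \<ge> 0" using p x by (simp add: B_def)
    have finSS: "finite (SS s)" by (rule finite_subset[of _ "Pow {1..n}"]) (auto simp: SS_def)
    have cSS: "card (SS s) = n choose s" using n_subsets[of "{1..n}" s] by (simp add: SS_def)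
    have "measure_pmf.prob (Gnp_col n p r) (\<Union>S\<in>SS s. \<Union>F\<in>FF s S. \<Union>K\<in>KK S. \<Union>jf\<in>JJ K. Ev S F K jf)
         \<le> card (SS s) * (real ((s * s) choose (s - 1)) * (real (s choose k0) * (real r ^ k0 * B)))"
    proof (rule union_bound_card[OF finSS])
      fix S assume S: "S \<in> SS s"
      have finS: "finite S" using S finite_subset by (auto simp: SS_def)
      have finFF: "finite (FF s S)"
        by (rule finite_subset[of _ "Pow (pairsin S)"]) (auto simp: FF_def finite_pairsin[OF finS])
      have "card (FF s S) = card (pairsin S) choose (s - 1)"
        using n_subsets[OF finite_pairsin[OF finS]] by (simp add: FF_def)
      also have "\<dots> \<le> (s * s) choose (s - 1)"
        using card_pairsin[OF finS] S by (intro binomial_right_mono) (simp add: SS_def)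
      finally have cFF: "card (FF s S) \<le> (s * s) choose (s - 1)" .
      have finKK: "finite (KK S)" by (rule finite_subset[of _ "Pow S"]) (auto simp: KK_def finS)
      have cKK: "card (KK S) = s choose k0" using n_subsets[OF finS] S by (simp add: KK_def SS_def)
      have "measure_pmf.prob (Gnp_col n p r) (\<Union>F\<in>FF s S. \<Union>K\<in>KK S. \<Union>jf\<in>JJ K. Ev S F K jf)
            \<le> card (FF s S) * (real (s choose k0) * (real r ^ k0 * B))"
      proof (rule union_bound_card[OF finFF])
        fix F assume F: "F \<in> FF s S"
        have "measure_pmf.prob (Gnp_col n p r) (\<Union>K\<in>KK S. \<Union>jf\<in>JJ K. Ev S F K jf)
            \<le> card (KK S) * (real r ^ k0 * B)"
        proof (rule union_bound_card[OF finKK])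
          fix K assume K: "K \<in> KK S"
          have finK: "finite K" using K finS finite_subset by (auto simp: KK_def)
          have finJJ: "finite (JJ K)" by (simp add: JJ_def finite_PiE finK)
          have cJJ: "card (JJ K) = r ^ k0" using K finK by (simp add: JJ_def card_PiE KK_def)
          have "measure_pmf.prob (Gnp_col n p r) (\<Union>jf\<in>JJ K. Ev S F K jf) \<le> card (JJ K) * B"
          proof (rule union_bound_card[OF finJJ])
            fix jf assume jf: "jf \<in> JJ K"
            have a1: "S \<subseteq> {1..n}" "card S = s" using S by (auto simp: SS_def)
            have a2: "F \<subseteq> pairsin S" "card F = s - 1" using F by (auto simp: FF_def)
            have a3: "K \<subseteq> S" "card K = k0" using K by (auto simp: KK_def)
            have a4: "\<And>v. v \<in> K \<Longrightarrow> jf v \<in> {1..r}" using jf by (auto simp: JJ_def)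
            show "measure_pmf.prob (Gnp_col n p r) (Ev S F K jf) \<le> B"
              using core_bound[OF nk r p x a1(1) a3(1) a2(1) a4, where t=t]
              unfolding Ev_def B_def a1(2) a2(2) a3(2) .
          qed
          thus "measure_pmf.prob (Gnp_col n p r) (\<Union>jf\<in>JJ K. Ev S F K jf) \<le> real r ^ k0 * B"
            by (simp add: cJJ)
        qed
        thus "measure_pmf.prob (Gnp_col n p r) (\<Union>K\<in>KK S. \<Union>jf\<in>JJ K. Ev S F K jf)
            \<le> real (s choose k0) * (real r ^ k0 * B)" by (simp add: cKK)
      qed
      also have "\<dots> \<le> real ((s * s) choose (s - 1)) * (real (s choose k0) * (real r ^ k0 * B))"
        using cFF B0 by (intro mult_right_mono) auto
      finally show "measure_pmf.prob (Gnp_col n p r) (\<Union>F\<in>FF s S. \<Union>K\<in>KK S. \<Union>jf\<in>JJ K. Ev S F K jf) \<le> \<dots>" .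
    qed
    thus "measure_pmf.prob (Gnp_col n p r) (\<Union>S\<in>SS s. \<Union>F\<in>FF s S. \<Union>K\<in>KK S. \<Union>jf\<in>JJ K. Ev S F K jf)
         \<le> real (n choose s) * real ((s * s) choose (s - 1)) * real (s choose k0) * real r ^ k0 *
          (p ^ (s - 1) * exp (- (p / r) * (1 - x) * k0 * (real k - s)) / x powr (t * k0))"
      by (simp add: cSS B_def mult.assoc)
  qed
  finally show ?thesis .
qed

lemma prob_small_vertex:
  fixes x t p :: real
  assumes nk: "n = r * k" and r: "r \<ge> 1" and p: "0 \<le> p" "p \<le> 1"
  assumes x: "0 < x" "x \<le> 1" and t: "eta \<epsilon> r * ln (real n) \<le> t" and v: "v \<in> {1..n}"
  shows "measure_pmf.prob (Gnp_col n p r) {G. v \<in> small_set \<epsilon> G n r}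
     \<le> real r * (exp (- (p / r) * (1 - x) * (real k - 1)) / x powr t)"
proof -
  have r0: "r > 0" using r by simp
  have "{G. v \<in> small_set \<epsilon> G n r} \<subseteq> (\<Union>j\<in>{1..r}. {G. (\<forall>e\<in>{}. G e \<noteq> None) \<and> (\<forall>w\<in>{v}. real (Dout G n r ((\<lambda>_. j) w) w {v}) \<le> t)})"
  proof
    fix G assume "G \<in> {G. v \<in> small_set \<epsilon> G n r}"
    hence "v \<in> small_set \<epsilon> G n r" by simp
    from small_Dout[OF nk r0 this t, of "{v}"] obtain j where "j \<in> {1..r}" "real (Dout G n r j v {v}) \<le> t"
      by blast
    thus "G \<in> (\<Union>j\<in>{1..r}. {G. (\<forall>e\<in>{}. G e \<noteq> None) \<and> (\<forall>w\<in>{v}. real (Dout G n r ((\<lambda>_. j) w) w {v}) \<le> t)})"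
      by blast
  qed
  hence "measure_pmf.prob (Gnp_col n p r) {G. v \<in> small_set \<epsilon> G n r}
     \<le> measure_pmf.prob (Gnp_col n p r) (\<Union>j\<in>{1..r}. {G. (\<forall>e\<in>{}. G e \<noteq> None) \<and> (\<forall>w\<in>{v}. real (Dout G n r ((\<lambda>_. j) w) w {v}) \<le> t)})"
    by (rule measure_pmf.finite_measure_mono) simp
  also have "\<dots> \<le> card {1..r} * (exp (- (p / r) * (1 - x) * (real k - 1)) / x powr t)"
  proof (rule union_bound_card, simp)
    fix j assume j: "j \<in> {1..r}"
    have "{v} \<subseteq> {1..n}" using v by simp
    from core_bound[OF nk r p x this _ _ , of "{v}" "{}" "\<lambda>_. j" t] j
    show "measure_pmf.prob (Gnp_col n p r) {G. (\<forall>e\<in>{}. G e \<noteq> None) \<and> (\<forall>w\<in>{v}. real (Dout G n r ((\<lambda>_. j) w) w {v}) \<le> t)}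
        \<le> exp (- (p / r) * (1 - x) * (real k - 1)) / x powr t" by simp
  qed
  finally show ?thesis by simp
qed

lemma part_a_prob:
  fixes x t p c :: real
  assumes nk: "n = r * k" and r: "r \<ge> 1" and p: "0 \<le> p" "p \<le> 1"
  assumes x: "0 < x" "x \<le> 1" and t: "eta \<epsilon> r * ln (real n) \<le> t" and c: "c > 0"
  shows "measure_pmf.prob (Gnp_col n p r) {G. real (card (small_set \<epsilon> G n r)) > c}
     \<le> real n * (real r * (exp (- (p / r) * (1 - x) * (real k - 1)) / x powr t)) / c"
proof -
  let ?M = "measure_pmf (Gnp_col n p r)"
  define I where "I v = {G :: cgraph. v \<in> small_set \<epsilon> G n r}" for v
  define u where "u G = (\<Sum>v\<in>{1..n}. indicator (I v) G :: real)" for G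
  have cu: "real (card (small_set \<epsilon> G n r)) = u G" for G
  proof -
    have "u G = (\<Sum>v\<in>{1..n}. if v \<in> small_set \<epsilon> G n r then 1 else 0)"
      unfolding u_def by (intro sum.cong) (auto simp: I_def indicator_def)
    also have "\<dots> = (\<Sum>v\<in>{v\<in>{1..n}. v \<in> small_set \<epsilon> G n r}. 1)"
      by (rule sum.inter_filter[symmetric]) simp
    also have "\<dots> = real (card {v\<in>{1..n}. v \<in> small_set \<epsilon> G n r})" by simp
    also have "{v\<in>{1..n}. v \<in> small_set \<epsilon> G n r} = small_set \<epsilon> G n r" by (auto simp: small_set_def)
    finally show ?thesis by simp
  qed
  have int: "integrable ?M u"
    unfolding u_def by (rule Bochner_Integration.integrable_sum) (auto intro!: measure_pmf.integrable_const_bound[where B=1])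
  have "measure_pmf.prob (Gnp_col n p r) {G. real (card (small_set \<epsilon> G n r)) > c}
      \<le> measure ?M {G\<in>space ?M. u G \<ge> c}"
    by (rule measure_pmf.finite_measure_mono) (auto simp: cu)
  also have "\<dots> \<le> (\<integral>G. u G \<partial>?M) / c"
    by (rule integral_Markov_inequality_measure[OF int, where A=UNIV]) (auto simp: c u_def intro!: sum_nonneg)
  also have "(\<integral>G. u G \<partial>?M) = (\<Sum>v\<in>{1..n}. measure_pmf.prob (Gnp_col n p r) (I v))"
    unfolding u_def by (subst Bochner_Integration.integral_sum) (auto intro!: measure_pmf.integrable_const_bound[where B=1])
  also have "\<dots> \<le> (\<Sum>v\<in>{1..n}. real r * (exp (- (p / r) * (1 - x) * (real k - 1)) / x powr t))"
    by (rule sum_mono) (unfold I_def, rule prob_small_vertex[OF nk r p x t], simp)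
  also have "\<dots> = real n * (real r * (exp (- (p / r) * (1 - x) * (real k - 1)) / x powr t))" by simp
  finally show ?thesis using c by (simp add: divide_right_mono)
qed



lemma fact_ge_pow: "real m ^ m \<le> exp (real m) * fact m"
proof (induction m)
  case 0 thus ?case by simp
next
  case (Suc m)
  have step: "real (Suc m) ^ m \<le> exp 1 * real m ^ m"
  proof (cases "m = 0")
    case True thus ?thesis by simp
  next
    case False
    have "(1 + 1 / real m) ^ m \<le> exp 1"
      using exp_ge_one_plus_x_over_n_power_n[of m 1] False by simp
    moreover have "real (Suc m) ^ m = (1 + 1 / real m) ^ m * real m ^ m"
      using False by (simp add: power_mult_distrib[symmetric] field_simps)
    ultimately show ?thesis by (simp add: mult_right_mono)
  qed
  have "real (Suc m) ^ Suc m = real (Suc m) * real (Suc m) ^ m" by simp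
  also have "\<dots> \<le> real (Suc m) * (exp 1 * real m ^ m)"
    by (intro mult_left_mono step) auto
  also have "\<dots> \<le> real (Suc m) * (exp 1 * (exp (real m) * fact m))"
    by (intro mult_left_mono Suc.IH) auto
  also have "\<dots> = exp (real (Suc m)) * fact (Suc m)"
    by (simp add: exp_add[symmetric] algebra_simps)
  finally show ?case .
qed

lemma binom_le_exp:
  assumes "m \<ge> 1"
  shows "real (N choose m) \<le> (exp 1 * real N / real m) ^ m"
proof -
  have f: "fact m > (0::real)" by simp
  have "real (N choose m) * fact m \<le> real N ^ m"
    using binomial_fact_pow[of N m] by (metis of_nat_fact of_nat_le_iff of_nat_mult of_nat_power)
  hence "real (N choose m) \<le> real N ^ m / fact m" using f by (simp add: field_simps)
  also have "\<dots> \<le> real N ^ m / (real m ^ m / exp (real m))"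
    using fact_ge_pow[of m] assms by (intro divide_left_mono) (auto simp: field_simps)
  also have "\<dots> = (exp 1 * real N / real m) ^ m"
    using assms by (simp add: power_divide power_mult_distrib exp_of_nat_mult[symmetric] field_simps)
  finally show ?thesis .
qed

lemma geom_sum_le:
  fixes \<beta> :: real
  assumes "0 \<le> \<beta>" "\<beta> \<le> 1/2"
  shows "(\<Sum>s\<in>{1..M}. \<beta> ^ s) \<le> 2 * \<beta>"
proof -
  have eq: "(1 - \<beta>) * (\<Sum>s\<in>{1..M}. \<beta> ^ s) = \<beta> - \<beta> ^ (M + 1)" for M
  proof (induction M)
    case 0 show ?case by simp
  next
    case (Suc M)
    have "(1 - \<beta>) * (\<Sum>s\<in>{1..Suc M}. \<beta> ^ s) = (1 - \<beta>) * (\<Sum>s\<in>{1..M}. \<beta> ^ s) + (1 - \<beta>) * \<beta> ^ Suc M"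
      by (simp add: algebra_simps)
    also have "\<dots> = \<beta> - \<beta> ^ (Suc M + 1)" by (simp only: Suc.IH) (simp add: algebra_simps)
    finally show ?case .
  qed
  have S0: "0 \<le> (\<Sum>s\<in>{1..M}. \<beta> ^ s)" using assms by (intro sum_nonneg) auto
  have "1/2 * (\<Sum>s\<in>{1..M}. \<beta> ^ s) \<le> (1 - \<beta>) * (\<Sum>s\<in>{1..M}. \<beta> ^ s)"
    using assms S0 by (intro mult_right_mono) auto
  moreover have "\<beta> ^ (M + 1) \<ge> 0" using assms by simp
  ultimately show ?thesis using eq[of M] assms by linarith
qed

lemma exp101_le: "exp (1::real) ^ 101 \<le> 100 ^ 100"
proof -
  have "exp (1::real) ^ 101 \<le> 3 ^ 101"
    using exp_le by (intro power_mono) auto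
  also have "(3::real) ^ 101 \<le> 100 ^ 100" by simp
  finally show ?thesis .
qed

lemma termC_bound:
  fixes n s :: nat and L c1 p :: real
  assumes n: "n > 0" and L: "L > 0" and p: "p = c1 * L / n" and c1: "c1 > 0"
  assumes y1: "exp 1 * c1 / (100 * L) \<le> 1"
  assumes s: "s \<ge> 1" "real s \<le> n / L\<^sup>2"
  shows "real (n choose s) * real ((s * s) choose (100 * s + 1)) * p ^ (100 * s + 1) \<le> (c1 ^ 100 / L ^ 98) ^ s"
proof -
  define m where "m = 100 * s + 1"
  define y where "y = exp 1 * s * p / 100"
  have p0: "p \<ge> 0" using p c1 L by simp
  have y0: "y \<ge> 0" using p0 by (simp add: y_def)
  have y1': "y \<le> 1"
  proof -
    have "exp 1 * (real s * p) / 100 \<le> exp 1 * ((n / L\<^sup>2) * p) / 100"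
      using mult_right_mono[OF s(2) p0] by (intro divide_right_mono mult_left_mono) auto
    hence "y \<le> exp 1 * (n / L\<^sup>2) * p / 100" by (simp add: y_def mult.assoc)
    also have "\<dots> = exp 1 * c1 / (100 * L)" using n L by (simp add: p power2_eq_square field_simps)
    finally show ?thesis using y1 by simp
  qed
  have m1: "m \<ge> 1" by (simp add: m_def)
  have "real ((s * s) choose m) * p ^ m \<le> (exp 1 * real (s * s) / real m) ^ m * p ^ m"
    using binom_le_exp[OF m1, of "s * s"] p0 by (intro mult_right_mono) auto
  also have "\<dots> = (exp 1 * real (s * s) / real m * p) ^ m" by (simp only: power_mult_distrib)
  also have "\<dots> \<le> y ^ m"
  proof (intro power_mono)
    have "real (s * s) / real m \<le> real s / 100"
      using s by (simp add: m_def field_simps)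
    hence "exp 1 * (real (s * s) / real m) * p \<le> exp 1 * (real s / 100) * p"
      using p0 by (intro mult_right_mono mult_left_mono) auto
    thus "exp 1 * real (s * s) / real m * p \<le> y" by (simp add: y_def)
    show "0 \<le> exp 1 * real (s * s) / real m * p" using p0 by simp
  qed
  also have "\<dots> \<le> y ^ (100 * s)"
    using y0 y1' by (intro power_decreasing) (auto simp: m_def)
  finally have A: "real ((s * s) choose m) * p ^ m \<le> y ^ (100 * s)" .
  have B: "real (n choose s) \<le> (exp 1 * real n / real s) ^ s" by (rule binom_le_exp[OF s(1)])
  have "real (n choose s) * real ((s * s) choose m) * p ^ m \<le> (exp 1 * real n / real s) ^ s * y ^ (100 * s)"
    using A B p0 by (simp only: mult.assoc) (intro mult_mono, auto)
  also have "\<dots> = (exp 1 * real n / real s * y ^ 100) ^ s"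
    by (simp only: power_mult power_mult_distrib)
  also have "\<dots> \<le> (c1 ^ 100 / L ^ 98) ^ s"
  proof (intro power_mono)
    show "0 \<le> exp 1 * real n / real s * y ^ 100" using y0 by simp
    have "exp 1 * real n / real s * y ^ 100 = (exp 1 ^ 101 / 100 ^ 100) * (real n * real s ^ 99 * p ^ 100)"
    proof -
      have e1: "real s ^ 100 = real s * real s ^ 99" by (subst power_Suc[symmetric]) simp
      have e2: "exp (1::real) ^ 101 = exp 1 * exp 1 ^ 100" by (subst power_Suc[symmetric]) simp
      show ?thesis using s by (simp add: y_def power_mult_distrib power_divide field_simps e1 e2)
    qed
    also have "\<dots> \<le> 1 * (real n * real s ^ 99 * p ^ 100)"
      using exp101_le p0 by (intro mult_right_mono) auto
    also have "\<dots> \<le> real n * (n / L\<^sup>2) ^ 99 * p ^ 100"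
      using s p0 unfolding mult_1_left by (intro mult_right_mono mult_left_mono power_mono) auto
    also have "\<dots> = c1 ^ 100 / L ^ 98"
      using n L power_Suc[of "real n" 99] by (simp add: p power_divide power_mult_distrib field_simps power_mult[symmetric])
    finally show "exp 1 * real n / real s * y ^ 100 \<le> c1 ^ 100 / L ^ 98" by simp
  qed
  finally show ?thesis by (simp add: m_def)
qed

lemma sumC_bound:
  fixes n :: nat and L c1 p :: real
  assumes n: "n > 0" and L: "L > 0" and p: "p = c1 * L / n" and c1: "c1 > 0"
  assumes y1: "exp 1 * c1 / (100 * L) \<le> 1" and b: "c1 ^ 100 / L ^ 98 \<le> 1/2"
  shows "(\<Sum>s\<in>{1..nat \<lfloor>n / L\<^sup>2\<rfloor>}. real (n choose s) * real ((s * s) choose (100 * s + 1)) * p ^ (100 * s + 1))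
         \<le> 2 * (c1 ^ 100 / L ^ 98)"
proof -
  have "(\<Sum>s\<in>{1..nat \<lfloor>n / L\<^sup>2\<rfloor>}. real (n choose s) * real ((s * s) choose (100 * s + 1)) * p ^ (100 * s + 1))
      \<le> (\<Sum>s\<in>{1..nat \<lfloor>n / L\<^sup>2\<rfloor>}. (c1 ^ 100 / L ^ 98) ^ s)"
  proof (rule sum_mono)
    fix s assume s: "s \<in> {1..nat \<lfloor>n / L\<^sup>2\<rfloor>}"
    hence "real s \<le> n / L\<^sup>2" by (simp add: le_nat_floor) linarith
    thus "real (n choose s) * real ((s * s) choose (100 * s + 1)) * p ^ (100 * s + 1) \<le> (c1 ^ 100 / L ^ 98) ^ s"
      using s by (intro termC_bound[OF n L p c1 y1]) auto
  qed
  also have "\<dots> \<le> 2 * (c1 ^ 100 / L ^ 98)"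
    using b c1 L by (intro geom_sum_le) auto
  finally show ?thesis .
qed

lemma binom_le_pow': "real (N choose m) \<le> real N ^ m"
proof -
  have "(N choose m) * fact m \<le> N ^ m" by (rule binomial_fact_pow)
  moreover have "(N choose m) \<le> (N choose m) * fact m" by simp
  ultimately show ?thesis by (metis of_nat_le_iff of_nat_power order.trans)
qed

lemma termB_bound:
  fixes n k r k0 s :: nat and L c1 p x t \<delta> \<Lambda> :: real
  assumes n: "n > 0" and L: "L = ln n" and p: "p = c1 * L / n" and c1L: "1 \<le> c1 * L"
  assumes p01: "0 \<le> p" "p \<le> 1" and r: "r \<ge> 1" and x: "0 < x" "x \<le> 1"
  assumes H1: "(1 + 2 * \<delta>) * L \<le> (p / r) * (1 - x) * k0 * k"
  assumes H2: "exp (- \<delta> * L) \<le> x powr (t * k0)"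
  assumes s: "s \<ge> 1" "real s \<le> \<Lambda>"
  shows "real (n choose s) * real ((s * s) choose (s - 1)) * real (s choose k0) * real r ^ k0 *
          (p ^ (s - 1) * exp (- (p / r) * (1 - x) * k0 * (real k - s)) / x powr (t * k0))
         \<le> real r ^ k0 * exp (- \<delta> * L) * (2 * exp (real k0) * c1 * L * \<Lambda>\<^sup>2) ^ s"
proof -
  define E where "E = exp (- (p / r) * (1 - x) * k0 * (real k - s))"
  define X where "X = x powr (t * k0)"
  have X0: "X > 0" using x by (simp add: X_def)
  have E0: "E \<ge> 0" by (simp add: E_def)
  have E: "E \<le> exp (- (1 + 2 * \<delta>) * L) * exp (real k0 * s)"
  proof -
    have "(p / r) * (1 - x) \<le> 1 * 1"
      using p01 r x by (intro mult_mono) (auto simp: field_simps)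
    hence "(p / r) * (1 - x) * (real k0 * real s) \<le> 1 * (real k0 * real s)"
      by (intro mult_right_mono) auto
    moreover define a where "a = (p / r) * (1 - x) * k0"
    ultimately have as: "a * s \<le> real k0 * s" by (simp add: mult.assoc)
    have eq0: "- c * (1 - x) * k0 * (real k - s) = - (c * (1 - x) * k0 * k) + c * (1 - x) * k0 * s" for c :: real
      by (simp add: algebra_simps)
    have eq: "- (p / r) * (1 - x) * k0 * (real k - s) = - (a * k) + a * s" unfolding a_def by (rule eq0)
    have H1': "(1 + 2 * \<delta>) * L \<le> a * k" using H1 by (simp add: a_def)
    have "- (p / r) * (1 - x) * k0 * (real k - s) \<le> - (1 + 2 * \<delta>) * L + real k0 * s"
      unfolding eq using as H1' by linarith
    thus ?thesis by (simp add: E_def exp_add[symmetric])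
  qed
  have X: "1 / X \<le> exp (\<delta> * L)"
    using H2 X0 by (simp add: X_def field_simps exp_minus)
  have np: "real n * p = c1 * L" using n by (simp add: p)
  have P: "real n ^ s * p ^ (s - 1) \<le> exp L * (c1 * L) ^ s"
  proof -
    have "real n ^ s * p ^ (s - 1) = real n * (real n * p) ^ (s - 1)"
      using s by (cases s) (auto simp: power_mult_distrib)
    also have "\<dots> \<le> real n * (c1 * L) ^ s"
      using c1L s by (simp add: np) (intro mult_left_mono power_increasing, auto)
    also have "real n * (c1 * L) ^ s = exp L * (c1 * L) ^ s" using n by (simp add: L)
    finally show ?thesis .
  qed
  have "real (n choose s) * real ((s * s) choose (s - 1)) * real (s choose k0) * real r ^ k0 * (p ^ (s - 1) * E / X)
      = real r ^ k0 * (real (n choose s) * p ^ (s - 1)) * real ((s * s) choose (s - 1)) * real (s choose k0) * E * (1 / X)"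
    by (simp add: field_simps)
  also have "\<dots> \<le> real r ^ k0 * (real n ^ s * p ^ (s - 1)) * real ((s * s) choose (s - 1)) * real (s choose k0) * E * (1 / X)"
    using X0 E0 p01 by (intro mult_right_mono mult_left_mono binom_le_pow') auto
  also have "\<dots> \<le> real r ^ k0 * (exp L * (c1 * L) ^ s) * real ((s * s) choose (s - 1)) * real (s choose k0) * E * (1 / X)"
    using X0 E0 p01 by (intro mult_right_mono mult_left_mono P) auto
  also have "\<dots> \<le> real r ^ k0 * (exp L * (c1 * L) ^ s) * (real s * real s) ^ s * real (s choose k0) * E * (1 / X)"
  proof -
    have "real ((s * s) choose (s - 1)) \<le> real (s * s) ^ (s - 1)" by (rule binom_le_pow')
    also have "\<dots> \<le> real (s * s) ^ s"
    proof (rule power_increasing)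
      have "1 * 1 \<le> s * s" using s by (intro mult_mono) auto
      thus "1 \<le> real (s * s)" by linarith
    qed simp
    finally show ?thesis using X0 E0 c1L by (intro mult_right_mono mult_left_mono) auto
  qed
  also have "\<dots> \<le> real r ^ k0 * (exp L * (c1 * L) ^ s) * (real s * real s) ^ s * 2 ^ s * E * (1 / X)"
    using X0 E0 c1L binomial_le_pow2[of s k0] by (intro mult_right_mono mult_left_mono) (auto simp flip: of_nat_power)
  also have "\<dots> \<le> real r ^ k0 * (exp L * (c1 * L) ^ s) * (real s * real s) ^ s * 2 ^ s * (exp (- (1 + 2 * \<delta>) * L) * exp (real k0 * s)) * exp (\<delta> * L)"
    using X0 E0 c1L E X by (intro mult_mono mult_right_mono mult_left_mono) auto
  also have "\<dots> = real r ^ k0 * exp (- \<delta> * L) * (2 * exp (real k0) * c1 * L * (real s * real s)) ^ s"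
  proof -
    have "exp L * exp (- (1 + 2 * \<delta>) * L) * exp (\<delta> * L) = exp (- \<delta> * L)"
      by (simp add: exp_add[symmetric] algebra_simps)
    moreover have "exp (real k0 * s) = exp (real k0) ^ s" by (simp add: exp_of_nat_mult[symmetric] mult.commute)
    ultimately show ?thesis by (simp add: power_mult_distrib algebra_simps)
  qed
  also have "\<dots> \<le> real r ^ k0 * exp (- \<delta> * L) * (2 * exp (real k0) * c1 * L * \<Lambda>\<^sup>2) ^ s"
  proof -
    have cl0: "0 \<le> c1 * L" using c1L by linarith
    have pos0: "0 \<le> (2 * exp (real k0)) * (c1 * L)" by (rule mult_nonneg_nonneg) (simp_all add: cl0)
    hence pos: "0 \<le> 2 * exp (real k0) * c1 * L" by (simp add: mult.assoc)
    have ss: "real s * real s \<le> \<Lambda>\<^sup>2" using s by (simp add: power2_eq_square mult_mono)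
    have m: "2 * exp (real k0) * c1 * L * (real s * real s) \<le> 2 * exp (real k0) * c1 * L * \<Lambda>\<^sup>2"
      by (rule mult_left_mono[OF ss pos])
    have b0: "0 \<le> 2 * exp (real k0) * c1 * L * (real s * real s)" using pos by simp
    have "(2 * exp (real k0) * c1 * L * (real s * real s)) ^ s \<le> (2 * exp (real k0) * c1 * L * \<Lambda>\<^sup>2) ^ s"
      by (rule power_mono[OF m b0])
    thus ?thesis by (rule mult_left_mono) simp
  qed
  finally show ?thesis by (simp add: E_def X_def)
qed

lemma sumB_bound:
  fixes n k r k0 :: nat and L c1 p x t \<delta> \<Lambda> :: real
  assumes n: "n > 0" and L: "L = ln n" and p: "p = c1 * L / n" and c1L: "1 \<le> c1 * L"
  assumes p01: "0 \<le> p" "p \<le> 1" and r: "r \<ge> 1" and x: "0 < x" "x \<le> 1"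
  assumes H1: "(1 + 2 * \<delta>) * L \<le> (p / r) * (1 - x) * k0 * k"
  assumes H2: "exp (- \<delta> * L) \<le> x powr (t * k0)"
  assumes \<Lambda>: "\<Lambda> \<ge> 1"
  shows "(\<Sum>s\<in>{1..nat \<lfloor>\<Lambda>\<rfloor>}. real (n choose s) * real ((s * s) choose (s - 1)) * real (s choose k0) * real r ^ k0 *
          (p ^ (s - 1) * exp (- (p / r) * (1 - x) * k0 * (real k - s)) / x powr (t * k0)))
         \<le> \<Lambda> * (real r ^ k0 * exp (- \<delta> * L) * (2 * exp (real k0) * c1 * L * \<Lambda>\<^sup>2) powr \<Lambda>)"
proof -
  define W where "W = 2 * exp (real k0) * c1 * L * \<Lambda>\<^sup>2"
  have W1: "W \<ge> 1"
  proof -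
    have "1 \<le> exp (real k0)" by simp
    hence e1: "1 \<le> 2 * exp (real k0)" by linarith
    have l1: "1 \<le> \<Lambda>\<^sup>2" using \<Lambda> by (simp add: one_le_power)
    have h: "1 * 1 \<le> (2 * exp (real k0)) * (c1 * L)"
      by (rule mult_mono[OF e1 c1L]) auto
    have "1 * 1 * 1 \<le> (2 * exp (real k0)) * (c1 * L) * \<Lambda>\<^sup>2"
      by (rule mult_mono[OF h l1]) (use h in linarith, simp)
    thus ?thesis by (simp add: W_def mult.assoc)
  qed
  have "(\<Sum>s\<in>{1..nat \<lfloor>\<Lambda>\<rfloor>}. real (n choose s) * real ((s * s) choose (s - 1)) * real (s choose k0) * real r ^ k0 *
          (p ^ (s - 1) * exp (- (p / r) * (1 - x) * k0 * (real k - s)) / x powr (t * k0)))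
      \<le> (\<Sum>s\<in>{1..nat \<lfloor>\<Lambda>\<rfloor>}. real r ^ k0 * exp (- \<delta> * L) * W powr \<Lambda>)"
  proof (rule sum_mono)
    fix s assume s: "s \<in> {1..nat \<lfloor>\<Lambda>\<rfloor>}"
    hence s': "s \<ge> 1" "real s \<le> \<Lambda>" by (auto simp: le_nat_floor) linarith
    have "real (n choose s) * real ((s * s) choose (s - 1)) * real (s choose k0) * real r ^ k0 *
          (p ^ (s - 1) * exp (- (p / r) * (1 - x) * k0 * (real k - s)) / x powr (t * k0))
         \<le> real r ^ k0 * exp (- \<delta> * L) * W ^ s"
      unfolding W_def by (rule termB_bound[OF n L p c1L p01 r x H1 H2 s'])
    also have "W ^ s \<le> W powr \<Lambda>"
      using W1 s' by (simp add: powr_realpow[symmetric]) (intro powr_mono, auto)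
    hence "real r ^ k0 * exp (- \<delta> * L) * W ^ s \<le> real r ^ k0 * exp (- \<delta> * L) * W powr \<Lambda>"
      by (intro mult_left_mono) auto
    finally show "real (n choose s) * real ((s * s) choose (s - 1)) * real (s choose k0) * real r ^ k0 *
          (p ^ (s - 1) * exp (- (p / r) * (1 - x) * k0 * (real k - s)) / x powr (t * k0))
         \<le> real r ^ k0 * exp (- \<delta> * L) * W powr \<Lambda>" .
  qed
  also have "\<dots> = real (nat \<lfloor>\<Lambda>\<rfloor>) * (real r ^ k0 * exp (- \<delta> * L) * W powr \<Lambda>)" by simp
  also have "\<dots> \<le> \<Lambda> * (real r ^ k0 * exp (- \<delta> * L) * W powr \<Lambda>)"
    using \<Lambda> by (intro mult_right_mono) auto
  finally show ?thesis by (simp add: W_def)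
qed

lemma boundA:
  fixes n k r :: nat and L p x t \<theta> a1 a2 \<gamma> :: real
  assumes n: "n > 0" and L: "L = ln n" and L0: "L \<ge> 0"
  assumes HA1: "a1 * L \<le> (p / r) * (1 - x) * (real k - 1)"
  assumes HA2: "exp (- a2 * L) \<le> x powr t" and x: "x > 0"
  assumes th: "\<theta> - a1 + a2 \<le> - \<gamma>"
  shows "real n * (real r * (exp (- (p / r) * (1 - x) * (real k - 1)) / x powr t)) / real n powr (1 - \<theta>)
         \<le> real r * exp (- \<gamma> * L)"
proof -
  have n1: "real n powr (1 - \<theta>) = exp ((1 - \<theta>) * L)" using n by (simp add: powr_def L)
  have n2: "real n = exp L" using n by (simp add: L)
  have nn: "real n / real n powr (1 - \<theta>) = exp (\<theta> * L)"
    unfolding n1 by (subst n2) (simp add: exp_diff[symmetric] algebra_simps)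
  have "real n * (real r * (exp (- (p / r) * (1 - x) * (real k - 1)) / x powr t)) / real n powr (1 - \<theta>)
       = real r * (exp (\<theta> * L) * exp (- (p / r) * (1 - x) * (real k - 1)) * (1 / x powr t))"
  proof -
    have gen: "n' * (r' * (E / X)) / P = r' * ((n' / P) * E * (1 / X))" if "X \<noteq> 0" "P \<noteq> 0" for n' r' E X P :: real
      using that by (simp add: field_simps)
    show ?thesis unfolding nn[symmetric] using x n by (intro gen) auto
  qed
  also have "\<dots> \<le> real r * (exp (\<theta> * L) * exp (- a1 * L) * exp (a2 * L))"
  proof (intro mult_left_mono mult_mono)
    show "exp (- (p / r) * (1 - x) * (real k - 1)) \<le> exp (- a1 * L)" using HA1 by simp
    show "1 / x powr t \<le> exp (a2 * L)" using HA2 x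
      by (simp add: field_simps exp_minus)
  qed auto
  also have "\<dots> = real r * exp ((\<theta> - a1 + a2) * L)" by (simp add: exp_add[symmetric] algebra_simps)
  also have "\<dots> \<le> real r * exp (- \<gamma> * L)"
  proof -
    have "(\<theta> - a1 + a2) * L \<le> (- \<gamma>) * L" by (rule mult_right_mono[OF th L0])
    thus ?thesis by (intro mult_left_mono) auto
  qed
  finally show ?thesis .
qed


lemma const_ineqs:
  fixes K \<alpha> \<epsilon> :: real
  assumes \<alpha>1: "\<alpha> \<ge> 1" and K: "K \<ge> \<alpha> + 1" and \<epsilon>: "0 < \<epsilon>" "\<epsilon> \<le> 1 / (4 * K\<^sup>2)"
  shows "\<epsilon> \<le> 1 / 8" "\<epsilon>\<^sup>2 * ln (2 * K) \<le> 1 / (16 * \<alpha>)" "\<epsilon>\<^sup>2 * K * ln (2 * K) \<le> 1 / (4 * \<alpha>)"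
proof -
  have K2: "K \<ge> 2" using \<alpha>1 K by simp
  have KK: "K\<^sup>2 \<ge> 4" using K2 power_mono[of 2 K 2] by simp
  show "\<epsilon> \<le> 1 / 8"
  proof -
    have "1 / (4 * K\<^sup>2) \<le> 1 / (4 * 4)" using KK by (intro divide_left_mono) auto
    thus ?thesis using \<epsilon> by simp
  qed
  have ln0: "0 \<le> ln (2 * K)" using K2 by simp
  have lnK: "ln (2 * K) \<le> 2 * K" using ln_le_minus_one[of "2 * K"] K2 by simp
  have e2: "\<epsilon>\<^sup>2 \<le> 1 / (16 * K ^ 4)"
  proof -
    have "\<epsilon>\<^sup>2 \<le> (1 / (4 * K\<^sup>2))\<^sup>2" using \<epsilon> by (intro power_mono) auto
    also have "\<dots> = 1 / (16 * K ^ 4)" by (simp add: power2_eq_square field_simps) (simp add: power_def)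
    finally show ?thesis .
  qed
  have "\<epsilon>\<^sup>2 * ln (2 * K) \<le> 1 / (16 * K ^ 4) * (2 * K)"
    using e2 lnK ln0 by (intro mult_mono) auto
  also have "\<dots> = 1 / (8 * K ^ 3)" using K2 by (simp add: field_simps power_def)
  also have "\<dots> \<le> 1 / (16 * \<alpha>)"
  proof (intro divide_left_mono)
    have "K ^ 3 = K * K * K" by (simp add: power_def)
    also have "\<dots> \<ge> 2 * 2 * K" using K2 by (intro mult_mono) auto
    finally show "16 * \<alpha> \<le> 8 * K ^ 3" using K \<alpha>1 by linarith
  qed (use \<alpha>1 K2 in auto)
  finally show "\<epsilon>\<^sup>2 * ln (2 * K) \<le> 1 / (16 * \<alpha>)" .
  have "\<epsilon>\<^sup>2 * K * ln (2 * K) \<le> 1 / (16 * K ^ 4) * K * (2 * K)"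
    using e2 lnK ln0 K2 by (intro mult_mono) auto
  also have "\<dots> = 1 / (8 * K\<^sup>2)" using K2 by (simp add: field_simps power_def)
  also have "\<dots> \<le> 1 / (4 * \<alpha>)"
  proof (intro divide_left_mono)
    have "K\<^sup>2 = K * K" by (simp add: power2_eq_square)
    also have "\<dots> \<ge> 2 * K" using K2 by (intro mult_right_mono) auto
    finally show "4 * \<alpha> \<le> 8 * K\<^sup>2" using K \<alpha>1 by linarith
  qed (use \<alpha>1 K2 in auto)
  finally show "\<epsilon>\<^sup>2 * K * ln (2 * K) \<le> 1 / (4 * \<alpha>)" .
qed


lemma alpha_r_ge2: "r \<ge> 3 \<Longrightarrow> alpha_r r \<ge> 2"
  by (simp add: alpha_r_def)

lemma per_k:
  fixes r k n k0 \<alpha> :: nat and \<epsilon> L c1 :: real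
  assumes r3: "r \<ge> 3" and \<epsilon>: "0 < \<epsilon>" "\<epsilon> \<le> 1 / (4 * (real (r * alpha_r r + 1))\<^sup>2)" and k2: "k \<ge> 2"
  assumes nk: "n = r * k" and \<alpha>: "\<alpha> = alpha_r r" and k0: "k0 = r * \<alpha> + 1"
    and L: "L = ln (real n)" and c1: "c1 = (1 + \<epsilon>) * real r / real \<alpha>"
  assumes E1: "c1 * L \<le> exp L" and E2: "1 \<le> c1 * L" and E3: "exp 1 * c1 / (100 * L) \<le> 1"
    and E4: "c1 ^ 100 / L ^ 98 \<le> 1/2" and E5: "1 \<le> ln L"
  shows "1 - (real r * exp (- (1 / (8 * (real r * real \<alpha>))) * L)
            + ln L * (real r ^ k0 * exp (- (1 / (4 * (real r * real \<alpha>))) * L) * (2 * exp (real k0) * c1 * L * (ln L)\<^sup>2) powr (ln L))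
            + 2 * (c1 ^ 100 / L ^ 98))
    \<le> measure_pmf.prob (Gnp_col n ((1 + \<epsilon>) * p_r r n) r)
        {G. real (card (small_set \<epsilon> G n r)) \<le> real n powr (1 - \<epsilon> / (2 * real r * real (alpha_r r)))
           \<and> (\<forall>S \<subseteq> {1..n}. real (card S) \<le> ln (ln (real n)) \<and> induced_connected G S
                 \<longrightarrow> card (S \<inter> small_set \<epsilon> G n r) \<le> r * alpha_r r)
           \<and> (\<forall>S \<subseteq> {1..n}. real (card S) \<le> real n / (ln (real n))\<^sup>2
                 \<longrightarrow> spanned_edges G S \<le> 100 * card S)}"
proof -
  define ra where "ra = real r * real \<alpha>"
  define p where "p = (1 + \<epsilon>) * p_r r n"
  define x :: real where "x = 1 / (2 * real k0)"
  define t where "t = \<epsilon>\<^sup>2 / real r * L"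
  define \<theta> where "\<theta> = \<epsilon> / (2 * real r * real (alpha_r r))"
  have \<alpha>2: "\<alpha> \<ge> 2" using alpha_r_ge2[OF r3] \<alpha> by simp
  have r1: "r \<ge> 1" using r3 by simp
  have ra0: "ra > 0" using \<alpha>2 r3 by (simp add: ra_def)
  have n0: "n > 0" using nk r3 k2 by simp
  have c10: "c1 > 0" using c1 \<epsilon> r3 \<alpha>2 by simp
  have L0: "L > 0"
  proof (rule ccontr)
    assume "\<not> L > 0"
    hence "c1 * L \<le> 0" using c10 by (simp add: mult_nonneg_nonpos)
    thus False using E2 by simp
  qed
  have expL: "exp L = real n" using n0 by (simp add: L)
  have p_eq: "p = c1 * L / real n"
    by (simp add: p_def p_r_def c1 L \<alpha> field_simps)
  have p0: "0 \<le> p" using c10 L0 n0 by (simp add: p_eq)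
  have p1: "p \<le> 1" using E1 n0 by (simp add: p_eq expL)
  have k0r: "real k0 = ra + 1" by (simp add: k0 ra_def)
  have x0: "0 < x" and x1: "x \<le> 1" and xh: "x \<le> 1/2" using k0r ra0 by (auto simp: x_def field_simps)
  have lnx: "ln x = - ln (2 * real k0)" using k0r ra0 by (simp add: x_def ln_div)
  have teta: "eta \<epsilon> r * ln (real n) \<le> t"
  proof -
    have "eta \<epsilon> r \<le> \<epsilon>\<^sup>2 / real r" by (simp add: eta_def eta0_def)
    hence "eta \<epsilon> r * L \<le> \<epsilon>\<^sup>2 / real r * L" using L0 by (intro mult_right_mono) auto
    thus ?thesis by (simp add: t_def L[symmetric])
  qed
  have CI: "\<epsilon> \<le> 1 / 8" "\<epsilon>\<^sup>2 * ln (2 * real k0) \<le> 1 / (16 * real \<alpha>)"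
      "\<epsilon>\<^sup>2 * real k0 * ln (2 * real k0) \<le> 1 / (4 * real \<alpha>)"
  proof -
    have A: "real \<alpha> \<ge> 1" using \<alpha>2 by simp
    have "1 * \<alpha> \<le> r * \<alpha>" by (rule mult_right_mono) (use r3 in auto)
    hence "k0 \<ge> \<alpha> + 1" using k0 by simp
    hence B: "real k0 \<ge> real \<alpha> + 1" by linarith
    have C: "\<epsilon> \<le> 1 / (4 * (real k0)\<^sup>2)" using \<epsilon> by (simp add: k0 \<alpha>)
    show "\<epsilon> \<le> 1 / 8" "\<epsilon>\<^sup>2 * ln (2 * real k0) \<le> 1 / (16 * real \<alpha>)"
      "\<epsilon>\<^sup>2 * real k0 * ln (2 * real k0) \<le> 1 / (4 * real \<alpha>)"
      using const_ineqs[OF A B \<epsilon>(1) C] by auto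
  qed
  have prk: "(p / r) * real k = (1 + \<epsilon>) * L / ra"
    using r3 k2 \<alpha>2 by (simp add: p_eq c1 nk ra_def field_simps)
  have PC: "measure_pmf.prob (Gnp_col n p r)
     {G. \<exists>S \<subseteq> {1..n}. real (card S) \<le> real n / L\<^sup>2 \<and> spanned_edges G S > 100 * card S}
     \<le> 2 * (c1 ^ 100 / L ^ 98)"
    using part_c_prob[OF nk r1 p0 p1, of "real n / L\<^sup>2"] sumC_bound[OF n0 L0 p_eq c10 E3 E4] by linarith
  define \<delta> where "\<delta> = 1 / (4 * ra)"
  have H1: "(1 + 2 * \<delta>) * L \<le> (p / r) * (1 - x) * k0 * k"
  proof -
    have e1: "(1 - x) * k0 = ra + 1/2" using k0r ra0 by (simp add: x_def field_simps)
    have "(p / r) * (1 - x) * k0 * k = ((p / r) * real k) * ((1 - x) * k0)" by simp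
    also have "\<dots> = (1 + \<epsilon>) * L / ra * (ra + 1/2)" by (simp only: prk e1)
    finally have eq: "(p / r) * (1 - x) * k0 * k = (1 + \<epsilon>) * (L * (ra + 1/2) / ra)" by simp
    have eq2: "(1 + 2 * \<delta>) * L = 1 * (L * (ra + 1/2) / ra)" using ra0 by (simp add: \<delta>_def field_simps)
    show ?thesis unfolding eq eq2 using \<epsilon> L0 ra0 by (intro mult_right_mono) auto
  qed
  have H2: "exp (- \<delta> * L) \<le> x powr (t * k0)"
  proof -
    have "t * k0 * ln (2 * real k0) = (\<epsilon>\<^sup>2 * real k0 * ln (2 * real k0)) * (L / r)" by (simp add: t_def)
    also have "\<dots> \<le> (1 / (4 * real \<alpha>)) * (L / r)" using CI L0 by (intro mult_right_mono) auto
    also have "\<dots> = \<delta> * L" by (simp add: \<delta>_def ra_def)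
    finally have "- \<delta> * L \<le> t * k0 * ln x" by (simp add: lnx)
    thus ?thesis using x0 by (simp add: powr_def)
  qed
  have PB: "measure_pmf.prob (Gnp_col n p r)
     {G. \<exists>S \<subseteq> {1..n}. real (card S) \<le> ln L \<and> induced_connected G S \<and> card (S \<inter> small_set \<epsilon> G n r) \<ge> k0}
     \<le> ln L * (real r ^ k0 * exp (- \<delta> * L) * (2 * exp (real k0) * c1 * L * (ln L)\<^sup>2) powr (ln L))"
    using part_b_prob[OF nk r1 p0 p1 x0 x1 teta, of k0 "ln L"] k0
      sumB_bound[OF n0 L p_eq E2 p0 p1 r1 x0 x1 H1 H2 E5] by simp
  have HA1: "1 / (4 * ra) * L \<le> (p / r) * (1 - x) * (real k - 1)"
  proof -
    have gen: "c * (1 - x) * (real k - 1) = (c * real k) * ((1 - x) * ((real k - 1) / k))" for c :: real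
      using k2 by (simp add: field_simps)
    have "(p / r) * (1 - x) * (real k - 1) = ((p / r) * real k) * ((1 - x) * ((real k - 1) / k))"
      by (rule gen)
    also have "\<dots> = ((1 + \<epsilon>) * L / ra) * ((1 - x) * ((real k - 1) / k))" by (simp only: prk)
    also have "\<dots> \<ge> (L / ra) * (1/2 * (1/2))"
    proof -
      have f1: "L / ra \<le> (1 + \<epsilon>) * L / ra" using \<epsilon> L0 ra0 by (simp add: divide_right_mono)
      have g1: "1/2 \<le> 1 - x" using xh by simp
      have g2: "1/2 \<le> (real k - 1) / k" using k2 by (simp add: field_simps)
      have f2: "1/2 * (1/2) \<le> (1 - x) * ((real k - 1) / k)"
        by (rule mult_mono[OF g1 g2]) (use xh in auto)
      show ?thesis by (rule mult_mono[OF f1 f2]) (use L0 ra0 \<epsilon> in auto)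
    qed
    finally show ?thesis by (simp add: field_simps)
  qed
  have HA2: "exp (- (1 / (16 * ra)) * L) \<le> x powr t"
  proof -
    have "t * ln (2 * real k0) = (\<epsilon>\<^sup>2 * ln (2 * real k0)) * (L / r)" by (simp add: t_def)
    also have "\<dots> \<le> (1 / (16 * real \<alpha>)) * (L / r)" using CI L0 by (intro mult_right_mono) auto
    also have "\<dots> = 1 / (16 * ra) * L" by (simp add: ra_def)
    finally have "- (1 / (16 * ra)) * L \<le> t * ln x" by (simp add: lnx)
    thus ?thesis using x0 by (simp add: powr_def)
  qed
  have th: "\<theta> - 1 / (4 * ra) + 1 / (16 * ra) \<le> - (1 / (8 * ra))"
    using CI(1) ra0 by (simp add: \<theta>_def ra_def \<alpha> field_simps)
  have PA: "measure_pmf.prob (Gnp_col n p r) {G. real (card (small_set \<epsilon> G n r)) > real n powr (1 - \<theta>)}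
      \<le> real r * exp (- (1 / (8 * ra)) * L)"
    using part_a_prob[OF nk r1 p0 p1 x0 x1 teta, of "real n powr (1 - \<theta>)"] n0
      boundA[OF n0 L _ HA1 HA2 x0 th] L0 by simp
  define BA where "BA = {G. real (card (small_set \<epsilon> G n r)) > real n powr (1 - \<theta>)}"
  define BB where "BB = {G. \<exists>S \<subseteq> {1..n}. real (card S) \<le> ln L \<and> induced_connected G S \<and> card (S \<inter> small_set \<epsilon> G n r) \<ge> k0}"
  define BC where "BC = {G. \<exists>S \<subseteq> {1..n}. real (card S) \<le> real n / L\<^sup>2 \<and> spanned_edges G S > 100 * card S}"
  define Good where "Good = {G. real (card (small_set \<epsilon> G n r)) \<le> real n powr (1 - \<epsilon> / (2 * real r * real (alpha_r r)))
           \<and> (\<forall>S \<subseteq> {1..n}. real (card S) \<le> ln (ln (real n)) \<and> induced_connected G S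
                 \<longrightarrow> card (S \<inter> small_set \<epsilon> G n r) \<le> r * alpha_r r)
           \<and> (\<forall>S \<subseteq> {1..n}. real (card S) \<le> real n / (ln (real n))\<^sup>2
                 \<longrightarrow> spanned_edges G S \<le> 100 * card S)}"
  have sub: "UNIV - (BA \<union> BB \<union> BC) \<subseteq> Good"
  proof
    fix G assume G: "G \<in> UNIV - (BA \<union> BB \<union> BC)"
    have a: "real (card (small_set \<epsilon> G n r)) \<le> real n powr (1 - \<theta>)" using G by (auto simp: BA_def)
    have b: "card (S \<inter> small_set \<epsilon> G n r) \<le> r * alpha_r r"
      if "S \<subseteq> {1..n}" "real (card S) \<le> ln (ln (real n))" "induced_connected G S" for S
    proof -
      have "\<not> card (S \<inter> small_set \<epsilon> G n r) \<ge> k0" using G that by (auto simp: BB_def L)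
      thus ?thesis by (simp add: k0 \<alpha>)
    qed
    have c: "spanned_edges G S \<le> 100 * card S"
      if "S \<subseteq> {1..n}" "real (card S) \<le> real n / (ln (real n))\<^sup>2" for S
      using G that by (force simp: BC_def L)
    show "G \<in> Good" using a b c by (auto simp: Good_def \<theta>_def)
  qed
  have "1 - (measure_pmf.prob (Gnp_col n p r) BA + measure_pmf.prob (Gnp_col n p r) BB + measure_pmf.prob (Gnp_col n p r) BC)
      \<le> 1 - measure_pmf.prob (Gnp_col n p r) (BA \<union> BB \<union> BC)"
    using measure_Un_le[of BA "measure_pmf (Gnp_col n p r)" BB]
      measure_Un_le[of "BA \<union> BB" "measure_pmf (Gnp_col n p r)" BC] by simp
  also have "\<dots> = measure_pmf.prob (Gnp_col n p r) (UNIV - (BA \<union> BB \<union> BC))"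
    using measure_pmf.prob_compl[of "BA \<union> BB \<union> BC" "Gnp_col n p r"] by simp
  also have "\<dots> \<le> measure_pmf.prob (Gnp_col n p r) Good"
    by (rule measure_pmf.finite_measure_mono[OF sub]) simp
  finally have main: "1 - (measure_pmf.prob (Gnp_col n p r) BA + measure_pmf.prob (Gnp_col n p r) BB + measure_pmf.prob (Gnp_col n p r) BC)
      \<le> measure_pmf.prob (Gnp_col n p r) Good" .
  have "1 - (real r * exp (- (1 / (8 * (real r * real \<alpha>))) * L)
            + ln L * (real r ^ k0 * exp (- (1 / (4 * (real r * real \<alpha>))) * L) * (2 * exp (real k0) * c1 * L * (ln L)\<^sup>2) powr (ln L))
            + 2 * (c1 ^ 100 / L ^ 98))
     \<le> 1 - (measure_pmf.prob (Gnp_col n p r) BA + measure_pmf.prob (Gnp_col n p r) BB + measure_pmf.prob (Gnp_col n p r) BC)"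
    using PA PB PC unfolding BA_def BB_def BC_def \<delta>_def ra_def by linarith
  also note main
  finally show ?thesis by (simp add: Good_def p_def)
qed


lemma lim_l1: "a > 0 \<Longrightarrow> ((\<lambda>L::real. exp (- a * L)) \<longlongrightarrow> 0) at_top" by real_asymp
lemma lim_l2: "d > 0 \<Longrightarrow> C > 0 \<Longrightarrow> ((\<lambda>L::real. ln L * (exp (- d * L) * (C * L * (ln L)\<^sup>2) powr (ln L))) \<longlongrightarrow> 0) at_top"
  by real_asymp
lemma lim_l3: "((\<lambda>L::real. 1 / L ^ 98) \<longlongrightarrow> 0) at_top" by real_asymp

lemma lim_bnd:
  fixes a d C c1 R R2 :: real
  assumes "a > 0" "d > 0" "C > 0"
  shows "((\<lambda>L. R * exp (- a * L) + ln L * (R2 * exp (- d * L) * (C * L * (ln L)\<^sup>2) powr (ln L))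
          + 2 * (c1 ^ 100 / L ^ 98)) \<longlongrightarrow> 0) at_top"
proof -
  have A: "((\<lambda>L. R * exp (- a * L)) \<longlongrightarrow> R * 0) at_top"
    by (intro tendsto_mult tendsto_const lim_l1 assms)
  have B: "((\<lambda>L. R2 * (ln L * (exp (- d * L) * (C * L * (ln L)\<^sup>2) powr (ln L)))) \<longlongrightarrow> R2 * 0) at_top"
    by (intro tendsto_mult tendsto_const lim_l2 assms)
  have Cc: "((\<lambda>L. (2 * c1 ^ 100) * (1 / L ^ 98)) \<longlongrightarrow> (2 * c1 ^ 100) * 0) at_top"
    by (intro tendsto_mult tendsto_const lim_l3)
  have "((\<lambda>L. R * exp (- a * L) + R2 * (ln L * (exp (- d * L) * (C * L * (ln L)\<^sup>2) powr (ln L)))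
          + (2 * c1 ^ 100) * (1 / L ^ 98)) \<longlongrightarrow> R * 0 + R2 * 0 + (2 * c1 ^ 100) * 0) at_top"
    by (intro tendsto_add A B Cc)
  moreover have "(\<lambda>L. R * exp (- a * L) + R2 * (ln L * (exp (- d * L) * (C * L * (ln L)\<^sup>2) powr (ln L)))
          + (2 * c1 ^ 100) * (1 / L ^ 98)) = (\<lambda>L. R * exp (- a * L) + ln L * (R2 * exp (- d * L) * (C * L * (ln L)\<^sup>2) powr (ln L))
          + 2 * (c1 ^ 100 / L ^ 98))"
    by (rule ext) (simp add: algebra_simps)
  ultimately show ?thesis by simp
qed

lemma main_conv:
  fixes r :: nat and \<epsilon> :: real
  assumes r3: "r \<ge> 3" and \<epsilon>: "0 < \<epsilon>" "\<epsilon> \<le> 1 / (4 * (real (r * alpha_r r + 1))\<^sup>2)"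
  shows "(\<lambda>k. measure_pmf.prob (Gnp_col (r * k) ((1 + \<epsilon>) * p_r r (r * k)) r)
         {G. real (card (small_set \<epsilon> G (r * k) r)) \<le> real (r * k) powr (1 - \<epsilon> / (2 * real r * real (alpha_r r)))
           \<and> (\<forall>S \<subseteq> {1..r * k}. real (card S) \<le> ln (ln (real (r * k))) \<and> induced_connected G S
                 \<longrightarrow> card (S \<inter> small_set \<epsilon> G (r * k) r) \<le> r * alpha_r r)
           \<and> (\<forall>S \<subseteq> {1..r * k}. real (card S) \<le> real (r * k) / (ln (real (r * k)))\<^sup>2
                 \<longrightarrow> spanned_edges G S \<le> 100 * card S)}) \<longlonglongrightarrow> 1"
proof -
  define \<alpha> where "\<alpha> = alpha_r r"
  define k0 where "k0 = r * \<alpha> + 1"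
  define c1 where "c1 = (1 + \<epsilon>) * real r / real \<alpha>"
  define Lf where "Lf k = ln (real (r * k))" for k :: nat
  define bnd where "bnd L = real r * exp (- (1 / (8 * (real r * real \<alpha>))) * L)
            + ln L * (real r ^ k0 * exp (- (1 / (4 * (real r * real \<alpha>))) * L) * (2 * exp (real k0) * c1 * L * (ln L)\<^sup>2) powr (ln L))
            + 2 * (c1 ^ 100 / L ^ 98)" for L
  have \<alpha>2: "\<alpha> \<ge> 2" using alpha_r_ge2[OF r3] by (simp add: \<alpha>_def)
  have c10: "c1 > 0" using \<alpha>2 r3 \<epsilon> by (simp add: c1_def)
  have lim_bnd': "(bnd \<longlongrightarrow> 0) at_top"
  proof -
    have "((\<lambda>L. real r * exp (- (1 / (8 * (real r * real \<alpha>))) * L)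
            + ln L * (real r ^ k0 * exp (- (1 / (4 * (real r * real \<alpha>))) * L) * ((2 * exp (real k0) * c1) * L * (ln L)\<^sup>2) powr (ln L))
            + 2 * (c1 ^ 100 / L ^ 98)) \<longlongrightarrow> 0) at_top"
      using \<alpha>2 r3 c10 by (intro lim_bnd) auto
    moreover have "bnd = (\<lambda>L. real r * exp (- (1 / (8 * (real r * real \<alpha>))) * L)
            + ln L * (real r ^ k0 * exp (- (1 / (4 * (real r * real \<alpha>))) * L) * ((2 * exp (real k0) * c1) * L * (ln L)\<^sup>2) powr (ln L))
            + 2 * (c1 ^ 100 / L ^ 98))"
      by (rule ext) (simp add: bnd_def mult.assoc)
    ultimately show ?thesis by simp
  qed
  have limL: "filterlim Lf at_top sequentially"
  proof -
    have "filterlim (\<lambda>k. real r * real k) at_top sequentially"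
      using r3 by (intro filterlim_tendsto_pos_mult_at_top[OF tendsto_const _ filterlim_real_sequentially]) auto
    hence "filterlim (\<lambda>k. real (r * k)) at_top sequentially" by simp
    thus ?thesis unfolding Lf_def by (rule filterlim_compose[OF ln_at_top])
  qed
  have lim1: "((\<lambda>k. 1 - bnd (Lf k)) \<longlongrightarrow> 1) sequentially"
  proof -
    have "((\<lambda>k. bnd (Lf k)) \<longlongrightarrow> 0) sequentially" by (rule filterlim_compose[OF lim_bnd' limL])
    from tendsto_diff[OF tendsto_const this, of 1] show ?thesis by simp
  qed
  have evL: "eventually (\<lambda>L. c1 * L \<le> exp L \<and> 1 \<le> c1 * L \<and> exp 1 * c1 / (100 * L) \<le> 1
                 \<and> c1 ^ 100 / L ^ 98 \<le> 1/2 \<and> 1 \<le> ln L) at_top"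
  proof -
    have 1: "eventually (\<lambda>L. c1 * L \<le> exp L) at_top" using c10 by real_asymp
    have 2: "eventually (\<lambda>L. 1 \<le> c1 * L) at_top" using c10 by real_asymp
    have 3: "eventually (\<lambda>L. exp 1 * c1 / (100 * L) \<le> 1) at_top" using c10 by real_asymp
    have 4: "eventually (\<lambda>L. c1 ^ 100 / L ^ 98 \<le> 1/2) at_top" using c10 by real_asymp
    have 5: "eventually (\<lambda>L::real. 1 \<le> ln L) at_top" by real_asymp
    show ?thesis using 1 2 3 4 5 by (intro eventually_conj) auto
  qed
  have evk: "eventually (\<lambda>k. c1 * Lf k \<le> exp (Lf k) \<and> 1 \<le> c1 * Lf k \<and> exp 1 * c1 / (100 * Lf k) \<le> 1
                 \<and> c1 ^ 100 / Lf k ^ 98 \<le> 1/2 \<and> 1 \<le> ln (Lf k)) sequentially"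
    using filterlim_iff[THEN iffD1, OF limL, rule_format, OF evL] by simp
  have low: "eventually (\<lambda>k. 1 - bnd (Lf k) \<le> measure_pmf.prob (Gnp_col (r * k) ((1 + \<epsilon>) * p_r r (r * k)) r)
         {G. real (card (small_set \<epsilon> G (r * k) r)) \<le> real (r * k) powr (1 - \<epsilon> / (2 * real r * real (alpha_r r)))
           \<and> (\<forall>S \<subseteq> {1..r * k}. real (card S) \<le> ln (ln (real (r * k))) \<and> induced_connected G S
                 \<longrightarrow> card (S \<inter> small_set \<epsilon> G (r * k) r) \<le> r * alpha_r r)
           \<and> (\<forall>S \<subseteq> {1..r * k}. real (card S) \<le> real (r * k) / (ln (real (r * k)))\<^sup>2
                 \<longrightarrow> spanned_edges G S \<le> 100 * card S)}) sequentially"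
    using evk eventually_ge_at_top[of 2]
  proof eventually_elim
    case (elim k)
    show ?case unfolding bnd_def
      by (rule per_k[OF r3 \<epsilon> elim(2) refl \<alpha>_def k0_def Lf_def c1_def]) (use elim(1) in auto)
  qed
  show ?thesis
    by (rule tendsto_sandwich[OF low _ lim1 tendsto_const]) (auto intro: measure_pmf.prob_le_1)
qed

theorem mainTheorem12:
  fixes r :: nat
  assumes "r \<ge> 3"
  shows "\<exists>\<epsilon>0 > 0. \<forall>\<epsilon>. 0 < \<epsilon> \<and> \<epsilon> < \<epsilon>0 \<longrightarrow>
    ((\<lambda>k. let n = r * k; p1 = (1 + \<epsilon>) * p_r r n;
              \<theta> = \<epsilon> / (2 * real r * real (alpha_r r)) in
       measure_pmf.prob (Gnp_col n p1 r)
         {G. real (card (small_set \<epsilon> G n r)) \<le> real n powr (1 - \<theta>)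
           \<and> (\<forall>S \<subseteq> {1..n}. real (card S) \<le> ln (ln (real n)) \<and> induced_connected G S
                 \<longrightarrow> card (S \<inter> small_set \<epsilon> G n r) \<le> r * alpha_r r)
           \<and> (\<forall>S \<subseteq> {1..n}. real (card S) \<le> real n / (ln (real n))\<^sup>2
                 \<longrightarrow> spanned_edges G S \<le> 100 * card S)})
     \<longlonglongrightarrow> 1)"
proof (intro exI[of _ "1 / (4 * (real (r * alpha_r r + 1))\<^sup>2)"] conjI allI impI)
  have "0 \<le> real r * real (alpha_r r)" by simp
  hence pos0: "0 < 1 + real r * real (alpha_r r)" by linarith
  show "0 < 1 / (4 * (real (r * alpha_r r + 1))\<^sup>2)" using pos0 by simp
  fix \<epsilon> :: real assume \<epsilon>: "0 < \<epsilon> \<and> \<epsilon> < 1 / (4 * (real (r * alpha_r r + 1))\<^sup>2)"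
  show "((\<lambda>k. let n = r * k; p1 = (1 + \<epsilon>) * p_r r n;
              \<theta> = \<epsilon> / (2 * real r * real (alpha_r r)) in
       measure_pmf.prob (Gnp_col n p1 r)
         {G. real (card (small_set \<epsilon> G n r)) \<le> real n powr (1 - \<theta>)
           \<and> (\<forall>S \<subseteq> {1..n}. real (card S) \<le> ln (ln (real n)) \<and> induced_connected G S
                 \<longrightarrow> card (S \<inter> small_set \<epsilon> G n r) \<le> r * alpha_r r)
           \<and> (\<forall>S \<subseteq> {1..n}. real (card S) \<le> real n / (ln (real n))\<^sup>2
                 \<longrightarrow> spanned_edges G S \<le> 100 * card S)})
     \<longlonglongrightarrow> 1)"
  proof -
    have "0 \<le> real r * real (alpha_r r)" by simp
    hence pos: "0 < 1 + real r * real (alpha_r r)" by linarith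
    hence ne: "1 + real r * real (alpha_r r) \<noteq> 0" by linarith
    show ?thesis unfolding Let_def using main_conv[OF assms, of \<epsilon>] \<epsilon> ne by simp
  qed
qed

end
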